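(* Let $G$ be a graph and $H$ the graph obtained from $G$ by a $Q$-switching with switching set $X$. Suppose that the neighborhood graph $G_X$ is a disjoint union of cycles and that $G_X[X]$ is a disjoint union of paths. Then $G_X[X\cup Y]\cong H_X[X\cup Y]$ for every $Y\subseteq N(X)$.
   Context: Graphs are finite and simple. $Q$ is a $k\times k$ real orthogonal matrix with no integral rows. $H$ is obtained from $G$ by a $Q$-switching with switching set $X$ ($|X|=k$) if $H$ has the same vertex set $V$ and, after ordering vertices with $X$ first, $A_H=M^TA_GM$ with $M=\operatorname{diag}(Q,-I_a,I_b)$ block diagonal, $a+b=|V|-k$. $N(X)$ is the set of vertices of $G$ adjacent to some vertex of $X$. The neighborhood graph $G_X$ has vertex set $X\cup N(X)$ and edge set the edges of $G$ with at least one endpoint in $X$; $H_X$ is defined analogously in $H$. $\Gamma[S]$ denotes the subgraph of $\Gamma$ induced on $S$. A single vertex counts as a path. *)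

theory Defs
  imports Complex_Main
begin

type_synonym 'a graph = "'a set \<times> 'a set set"

definition is_graph :: "'a graph \<Rightarrow> bool" where
  "is_graph \<Gamma> \<longleftrightarrow> finite (fst \<Gamma>) \<and>
     (\<forall>e\<in>snd \<Gamma>. \<exists>u v. e = {u, v} \<and> u \<noteq> v \<and> u \<in> fst \<Gamma> \<and> v \<in> fst \<Gamma>)"

definition adjm :: "'a graph \<Rightarrow> 'a \<Rightarrow> 'a \<Rightarrow> real" where
  "adjm \<Gamma> u v = (if {u, v} \<in> snd \<Gamma> then 1 else 0)"

text \<open>Q is a real matrix indexed by the switching set X (rows by the first index).\<close>
definition orthogonal_on :: "'a set \<Rightarrow> ('a \<Rightarrow> 'a \<Rightarrow> real) \<Rightarrow> bool" where
  "orthogonal_on X Q \<longleftrightarrow>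
     (\<forall>x\<in>X. \<forall>y\<in>X. (\<Sum>z\<in>X. Q z x * Q z y) = (if x = y then 1 else 0)) \<and>
     (\<forall>x\<in>X. \<forall>y\<in>X. (\<Sum>z\<in>X. Q x z * Q y z) = (if x = y then 1 else 0))"

definition no_integral_rows :: "'a set \<Rightarrow> ('a \<Rightarrow> 'a \<Rightarrow> real) \<Rightarrow> bool" where
  "no_integral_rows X Q \<longleftrightarrow> (\<forall>x\<in>X. \<exists>y\<in>X. Q x y \<notin> \<int>)"

text \<open>The block matrix diag(Q, -I_a, I_b); the signs on V - X are given by s.\<close>
definition switch_matrix :: "'a set \<Rightarrow> ('a \<Rightarrow> 'a \<Rightarrow> real) \<Rightarrow> ('a \<Rightarrow> real) \<Rightarrow> 'a \<Rightarrow> 'a \<Rightarrow> real" where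
  "switch_matrix X Q s u v =
     (if u \<in> X \<and> v \<in> X then Q u v else if u = v \<and> u \<notin> X then s u else 0)"

definition Q_switching :: "'a graph \<Rightarrow> 'a graph \<Rightarrow> 'a set \<Rightarrow> ('a \<Rightarrow> 'a \<Rightarrow> real) \<Rightarrow> bool" where
  "Q_switching G H X Q \<longleftrightarrow>
     is_graph G \<and> is_graph H \<and> fst H = fst G \<and> X \<subseteq> fst G \<and>
     orthogonal_on X Q \<and> no_integral_rows X Q \<and>
     (\<exists>s. (\<forall>v\<in>fst G - X. s v = -1 \<or> s v = 1) \<and>
        (\<forall>u\<in>fst G. \<forall>w\<in>fst G.
           adjm H u w = (\<Sum>x\<in>fst G. \<Sum>y\<in>fst G.
              switch_matrix X Q s x u * adjm G x y * switch_matrix X Q s y w)))"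

definition nbhd :: "'a graph \<Rightarrow> 'a set \<Rightarrow> 'a set" where
  "nbhd \<Gamma> X = {v \<in> fst \<Gamma>. \<exists>x\<in>X. {x, v} \<in> snd \<Gamma>}"

definition nbhd_graph :: "'a graph \<Rightarrow> 'a set \<Rightarrow> 'a graph" where
  "nbhd_graph \<Gamma> X = (X \<union> nbhd \<Gamma> X, {e \<in> snd \<Gamma>. e \<inter> X \<noteq> {}})"

definition induced :: "'a graph \<Rightarrow> 'a set \<Rightarrow> 'a graph" where
  "induced \<Gamma> S = (fst \<Gamma> \<inter> S, {e \<in> snd \<Gamma>. e \<subseteq> S})"

definition is_path_graph :: "'a graph \<Rightarrow> bool" where
  "is_path_graph \<Gamma> \<longleftrightarrow> (\<exists>vs. vs \<noteq> [] \<and> distinct vs \<and> set vs = fst \<Gamma> \<and>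
     snd \<Gamma> = {{vs ! i, vs ! Suc i} | i. Suc i < length vs})"

definition is_cycle_graph :: "'a graph \<Rightarrow> bool" where
  "is_cycle_graph \<Gamma> \<longleftrightarrow> (\<exists>vs. length vs \<ge> 3 \<and> distinct vs \<and> set vs = fst \<Gamma> \<and>
     snd \<Gamma> = {{vs ! i, vs ! (Suc i mod length vs)} | i. i < length vs})"

definition disjoint_union_of :: "('a graph \<Rightarrow> bool) \<Rightarrow> 'a graph \<Rightarrow> bool" where
  "disjoint_union_of P \<Gamma> \<longleftrightarrow> (\<exists>C. (\<forall>c\<in>C. c \<noteq> {}) \<and> \<Union>C = fst \<Gamma> \<and>
     (\<forall>c\<in>C. \<forall>d\<in>C. c \<noteq> d \<longrightarrow> c \<inter> d = {}) \<and>
     (\<forall>e\<in>snd \<Gamma>. \<exists>c\<in>C. e \<subseteq> c) \<and> (\<forall>c\<in>C. P (induced \<Gamma> c)))"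

definition isomorphic :: "'a graph \<Rightarrow> 'b graph \<Rightarrow> bool" where
  "isomorphic \<Gamma> \<Delta> \<longleftrightarrow> (\<exists>f. bij_betw f (fst \<Gamma>) (fst \<Delta>) \<and>
     (\<forall>u\<in>fst \<Gamma>. \<forall>v\<in>fst \<Gamma>. {u, v} \<in> snd \<Gamma> \<longleftrightarrow> {f u, f v} \<in> snd \<Delta>))"

end

theory Submission
  imports Defs
begin

definition mm :: "'a set \<Rightarrow> ('a \<Rightarrow> 'a \<Rightarrow> real) \<Rightarrow> ('a \<Rightarrow> 'a \<Rightarrow> real) \<Rightarrow> 'a \<Rightarrow> 'a \<Rightarrow> real" where
  "mm S A B x y = (\<Sum>z\<in>S. A x z * B z y)"

definition tr :: "('a \<Rightarrow> 'a \<Rightarrow> real) \<Rightarrow> 'a \<Rightarrow> 'a \<Rightarrow> real" where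
  "tr M x y = M y x"

definition idm :: "'a \<Rightarrow> 'a \<Rightarrow> real" where
  "idm x y = (if x = y then 1 else 0)"

fun mpow :: "'a set \<Rightarrow> ('a \<Rightarrow> 'a \<Rightarrow> real) \<Rightarrow> nat \<Rightarrow> 'a \<Rightarrow> 'a \<Rightarrow> real" where
  "mpow S A 0 = idm"
| "mpow S A (Suc j) = mm S A (mpow S A j)"

lemma mm_assoc:
  assumes "finite S"
  shows "mm S (mm S A B) C = mm S A (mm S B C)"
proof (intro ext)
  fix x y
  have "mm S (mm S A B) C x y = (\<Sum>z\<in>S. \<Sum>w\<in>S. A x w * B w z * C z y)"
    unfolding mm_def by (simp add: sum_distrib_right)
  also have "\<dots> = (\<Sum>w\<in>S. \<Sum>z\<in>S. A x w * B w z * C z y)"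
    by (rule sum.swap)
  also have "\<dots> = mm S A (mm S B C) x y"
    unfolding mm_def by (simp add: sum_distrib_left mult.assoc)
  finally show "mm S (mm S A B) C x y = mm S A (mm S B C) x y" .
qed

lemma mm_idm_left: "finite S \<Longrightarrow> x \<in> S \<Longrightarrow> mm S idm A x y = A x y"
proof -
  assume "finite S" "x \<in> S"
  have "mm S idm A x y = (\<Sum>z\<in>S. if x = z then A z y else 0)"
    unfolding mm_def idm_def by (rule sum.cong) auto
  then show ?thesis using \<open>finite S\<close> \<open>x \<in> S\<close> by simp
qed

lemma mm_idm_right: "finite S \<Longrightarrow> y \<in> S \<Longrightarrow> mm S A idm x y = A x y"
proof -
  assume "finite S" "y \<in> S"
  have "mm S A idm x y = (\<Sum>z\<in>S. if z = y then A x z else 0)"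
    unfolding mm_def idm_def by (rule sum.cong) auto
  then show ?thesis using \<open>finite S\<close> \<open>y \<in> S\<close> by simp
qed

lemma mm_cong:
  assumes "\<And>z. z \<in> S \<Longrightarrow> A x z = A' x z" "\<And>z. z \<in> S \<Longrightarrow> B z y = B' z y"
  shows "mm S A B x y = mm S A' B' x y"
  unfolding mm_def using assms by (intro sum.cong) auto

definition cj :: "'a set \<Rightarrow> ('a \<Rightarrow> 'a \<Rightarrow> real) \<Rightarrow> ('a \<Rightarrow> 'a \<Rightarrow> real) \<Rightarrow> 'a \<Rightarrow> 'a \<Rightarrow> real" where
  "cj S M A = mm S (mm S (tr M) A) M"

definition orth :: "'a set \<Rightarrow> ('a \<Rightarrow> 'a \<Rightarrow> real) \<Rightarrow> bool" where
  "orth S M \<longleftrightarrow> (\<forall>x\<in>S. \<forall>y\<in>S. mm S M (tr M) x y = idm x y) \<and> (\<forall>x\<in>S. \<forall>y\<in>S. mm S (tr M) M x y = idm x y)"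

lemma cj_mm:
  assumes S: "finite S" and o: "orth S M" and x: "x \<in> S" and y: "y \<in> S"
  shows "cj S M (mm S A B) x y = mm S (cj S M A) (cj S M B) x y"
proof -
  let ?Mt = "tr M"
  have "mm S (cj S M A) (cj S M B) x y = mm S (mm S ?Mt A) (mm S (mm S M ?Mt) (mm S B M)) x y"
    unfolding cj_def using S by (simp add: mm_assoc)
  also have "\<dots> = mm S (mm S ?Mt A) (mm S idm (mm S B M)) x y"
  proof (rule mm_cong[OF refl])
    fix z assume z: "z \<in> S"
    show "mm S (mm S M ?Mt) (mm S B M) z y = mm S idm (mm S B M) z y"
      using o z unfolding orth_def by (intro mm_cong refl) simp
  qed
  also have "\<dots> = mm S (mm S ?Mt A) (mm S B M) x y"
    using S by (intro mm_cong[OF refl]) (simp add: mm_idm_left)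
  also have "\<dots> = cj S M (mm S A B) x y"
    unfolding cj_def using S by (simp add: mm_assoc)
  finally show ?thesis by simp
qed

lemma cj_idm:
  assumes "finite S" "orth S M" "x \<in> S" "y \<in> S"
  shows "cj S M idm x y = idm x y"
proof -
  have "cj S M idm x y = mm S (tr M) M x y"
    unfolding cj_def using assms by (intro mm_cong refl) (simp add: mm_idm_right)
  then show ?thesis using assms unfolding orth_def by simp
qed

lemma cj_mpow:
  assumes S: "finite S" and o: "orth S M"
    and h: "\<And>x y. x \<in> S \<Longrightarrow> y \<in> S \<Longrightarrow> B x y = cj S M A x y"
  shows "x \<in> S \<Longrightarrow> y \<in> S \<Longrightarrow> mpow S B j x y = cj S M (mpow S A j) x y"
proof (induction j arbitrary: x y)
  case 0 then show ?case using cj_idm[OF S o] by simp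
next
  case (Suc j)
  have "mpow S B (Suc j) x y = mm S (cj S M A) (cj S M (mpow S A j)) x y"
    using Suc h by (simp, intro mm_cong) auto
  also have "\<dots> = cj S M (mpow S A (Suc j)) x y"
    using cj_mm[OF S o Suc.prems] by simp
  finally show ?case .
qed

locale tworeg =
  fixes V X Nn :: "'a set" and adj :: "'a \<Rightarrow> 'a \<Rightarrow> bool"
  assumes finV: "finite V" and VXN: "V = X \<union> Nn" and disj: "X \<inter> Nn = {}"
    and sym: "adj u w \<Longrightarrow> adj w u" and irr: "\<not> adj u u"
    and cl: "adj u w \<Longrightarrow> u \<in> V"
    and deg: "u \<in> V \<Longrightarrow> card {w. adj u w} = 2"
    and ind: "u \<in> Nn \<Longrightarrow> w \<in> Nn \<Longrightarrow> \<not> adj u w"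
begin

lemma cl2: "adj u w \<Longrightarrow> w \<in> V" using cl sym by blast

lemma finX: "finite X" using finV VXN by auto

definition oth :: "'a \<Rightarrow> 'a \<Rightarrow> 'a" where
  "oth u p = (SOME w. adj u w \<and> w \<noteq> p)"

lemma nbrs_eq:
  assumes "adj u p" shows "\<exists>q. q \<noteq> p \<and> {w. adj u w} = {p, q}"
proof -
  have "card {w. adj u w} = 2" using deg cl assms by blast
  then obtain a b where ab: "a \<noteq> b" "{w. adj u w} = {a, b}" by (auto simp: card_2_iff)
  then show ?thesis using assms by (metis insert_commute mem_Collect_eq insertE empty_iff)
qed

lemma oth_prop: assumes "adj u p" shows "adj u (oth u p) \<and> oth u p \<noteq> p"
proof -
  obtain q where "q \<noteq> p" "{w. adj u w} = {p, q}" using nbrs_eq[OF assms] by blast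
  then have "\<exists>w. adj u w \<and> w \<noteq> p" by auto
  then show ?thesis unfolding oth_def by (rule someI_ex)
qed

lemma oth_unique: assumes "adj u p" "adj u w" "w \<noteq> p" shows "w = oth u p"
proof -
  obtain q where q: "q \<noteq> p" "{w. adj u w} = {p, q}" using nbrs_eq[OF assms(1)] by blast
  have "w = q" using assms q by auto
  moreover have "oth u p = q" using oth_prop[OF assms(1)] q by auto
  ultimately show ?thesis by simp
qed

lemma nbrs_oth: assumes "adj u p" shows "{w. adj u w} = {p, oth u p}"
  using oth_prop[OF assms] oth_unique[OF assms] assms by auto

fun wk :: "'a \<Rightarrow> 'a \<Rightarrow> nat \<Rightarrow> 'a \<times> 'a" where
  "wk v a 0 = (v, a)"
| "wk v a (Suc k) = (snd (wk v a k), oth (snd (wk v a k)) (fst (wk v a k)))"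

definition walk :: "'a \<Rightarrow> 'a \<Rightarrow> nat \<Rightarrow> 'a" where
  "walk v a k = fst (wk v a k)"

lemma snd_wk: "snd (wk v a k) = walk v a (Suc k)"
  by (simp add: walk_def)

lemma walk0[simp]: "walk v a 0 = v" by (simp add: walk_def)
lemma walk1[simp]: "walk v a (Suc 0) = a" by (simp add: walk_def)
lemma walkSS: "walk v a (Suc (Suc k)) = oth (walk v a (Suc k)) (walk v a k)"
  by (simp add: walk_def)

lemma walk_adj: assumes "adj v a" shows "adj (walk v a k) (walk v a (Suc k))"
proof (induction k)
  case 0 then show ?case using assms by simp
next
  case (Suc k)
  then show ?case using oth_prop[of "walk v a (Suc k)" "walk v a k"] sym
    by (simp add: walkSS)
qed

lemma walk_nb: assumes "adj v a" shows "walk v a (Suc (Suc k)) \<noteq> walk v a k"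
  using oth_prop[of "walk v a (Suc k)" "walk v a k"] sym walk_adj[OF assms, of k]
  by (simp add: walkSS)

lemma walk_V: assumes "adj v a" shows "walk v a k \<in> V"
  using walk_adj[OF assms, of k] cl by blast

lemma walk_nbrs: assumes "adj v a" "0 < i"
  shows "{w. adj (walk v a i) w} = {walk v a (i - 1), walk v a (Suc i)}"
proof -
  obtain j where i: "i = Suc j" using assms(2) by (cases i) auto
  have "adj (walk v a i) (walk v a j)" using walk_adj[OF assms(1), of j] sym i by simp
  then have "{w. adj (walk v a i) w} = {walk v a j, oth (walk v a i) (walk v a j)}"
    by (rule nbrs_oth)
  then show ?thesis using i by (simp add: walkSS)
qed

lemma walk_inj:
  assumes va: "adj v a" and vN: "v \<in> Nn" and X: "\<And>i. 1 \<le> i \<Longrightarrow> i \<le> K \<Longrightarrow> walk v a i \<in> X"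
  shows "inj_on (walk v a) {0..K}"
proof -
  have "\<forall>i<j. walk v a i \<noteq> walk v a j" if "j \<le> K" for j
    using that
  proof (induction j rule: less_induct)
    case (less j)
    show ?case
    proof (intro allI impI)
      fix i assume ij: "i < j"
      show "walk v a i \<noteq> walk v a j"
      proof
        assume eq: "walk v a i = walk v a j"
        have jX: "walk v a j \<in> X" using X[of j] ij less.prems by simp
        show False
        proof (cases "i = 0")
          case True
          then show False using eq jX vN disj by auto
        next
          case False
          obtain j' where j': "j = Suc j'" using ij by (cases j) auto
          have "adj (walk v a i) (walk v a j')" using walk_adj[OF va, of j'] eq sym j' by simp
          then have "walk v a j' = walk v a (i - 1) \<or> walk v a j' = walk v a (Suc i)"
            using walk_nbrs[OF va, of i] False by auto
          then show False
          proof
            assume h: "walk v a j' = walk v a (i - 1)"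
            have "i - 1 < j'" using False ij j' by simp
            then show False using less.IH[of j'] h j' less.prems by auto
          next
            assume h: "walk v a j' = walk v a (Suc i)"
            consider "Suc i < j'" | "Suc i = j'" | "Suc i = j" using ij j' by linarith
            then show False
            proof cases
              case 1 then show ?thesis using less.IH[of j'] h j' less.prems by auto
            next
              case 2 then show ?thesis using walk_nb[OF va, of i] eq j' by simp
            next
              case 3 then show ?thesis using walk_adj[OF va, of i] eq irr by simp
            qed
          qed
        qed
      qed
    qed
  qed
  then show ?thesis unfolding inj_on_def
    by (metis atLeastAtMost_iff linorder_neqE_nat)
qed

definition port :: "'a \<Rightarrow> 'a \<Rightarrow> bool" where
  "port v a \<longleftrightarrow> v \<in> Nn \<and> adj v a"

lemma port_X: "port v a \<Longrightarrow> a \<in> X"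
  unfolding port_def using cl2 VXN ind by blast

lemma hit: assumes "port v a" shows "\<exists>k. 0 < k \<and> walk v a k \<in> Nn"
proof (rule ccontr)
  assume nh: "\<not> ?thesis"
  have allX: "walk v a k \<in> X" if "0 < k" for k
  proof -
    have "walk v a k \<notin> Nn" using nh that by blast
    then show ?thesis using walk_V[of v a k] assms VXN unfolding port_def by auto
  qed
  let ?K = "Suc (card X)"
  have "inj_on (walk v a) {0..?K}"
    using walk_inj[of v a ?K] assms allX unfolding port_def by auto
  then have inj: "inj_on (walk v a) {1..?K}" by (rule inj_on_subset) auto
  have "walk v a ` {1..?K} \<subseteq> X" using allX by auto
  then have "card (walk v a ` {1..?K}) \<le> card X" using finX by (simp add: card_mono)
  then show False using card_image[OF inj] by simp
qed

definition hh :: "'a \<Rightarrow> 'a \<Rightarrow> nat" where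
  "hh v a = (LEAST k. 0 < k \<and> walk v a k \<in> Nn)"

lemma hh_props:
  assumes "port v a"
  shows "0 < hh v a" "walk v a (hh v a) \<in> Nn" "\<And>k. 0 < k \<Longrightarrow> k < hh v a \<Longrightarrow> walk v a k \<in> X"
    "2 \<le> hh v a"
proof -
  obtain k where k: "0 < k \<and> walk v a k \<in> Nn" using hit[OF assms] by blast
  show h1: "0 < hh v a" "walk v a (hh v a) \<in> Nn"
    using LeastI[of "\<lambda>k. 0 < k \<and> walk v a k \<in> Nn", OF k] unfolding hh_def by auto
  show h3: "walk v a k \<in> X" if "0 < k" "k < hh v a" for k
  proof -
    have "\<not> (0 < k \<and> walk v a k \<in> Nn)" using not_less_Least[of k] that unfolding hh_def by blast
    then show ?thesis using walk_V[of v a k] assms that VXN unfolding port_def by auto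
  qed
  show "2 \<le> hh v a"
  proof (rule ccontr)
    assume "\<not> 2 \<le> hh v a"
    then have "hh v a = 1" using h1 by simp
    then show False using h1 port_X[OF assms] disj by auto
  qed
qed

lemma hh_inj: assumes "port v a" shows "inj_on (walk v a) {0..hh v a - 1}"
  using walk_inj[of v a "hh v a - 1"] assms hh_props[OF assms] unfolding port_def by auto

definition endv :: "'a \<Rightarrow> 'a \<Rightarrow> 'a" where "endv v a = walk v a (hh v a)"
definition sset :: "'a \<Rightarrow> 'a \<Rightarrow> 'a set" where "sset v a = walk v a ` {1..<hh v a}"
definition lst :: "'a \<Rightarrow> 'a \<Rightarrow> 'a" where "lst v a = walk v a (hh v a - 1)"

lemma sset_X: "port v a \<Longrightarrow> sset v a \<subseteq> X"
  unfolding sset_def using hh_props by auto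

lemma a_in_sset: "port v a \<Longrightarrow> a \<in> sset v a"
  unfolding sset_def using hh_props(4)[of v a] by (auto intro!: image_eqI[of _ _ 1])

lemma inj_sset: "port v a \<Longrightarrow> inj_on (walk v a) {1..<hh v a}"
  using hh_inj by (rule inj_on_subset) auto

lemma card_sset: "port v a \<Longrightarrow> card (sset v a) = hh v a - 1"
  unfolding sset_def using inj_sset card_image by fastforce

lemma adj_in_seg:
  assumes p: "port v a" and i: "0 < i" "i < hh v a" and m: "0 < m" "m < hh v a"
  shows "adj (walk v a i) (walk v a m) \<longleftrightarrow> (m = Suc i \<or> i = Suc m)"
proof -
  have inj: "inj_on (walk v a) {0..hh v a - 1}" by (rule hh_inj[OF p])
  have N: "walk v a (hh v a) \<in> Nn" using hh_props[OF p] by simp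
  have mX: "walk v a m \<in> X" using hh_props(3)[OF p] m by simp
  have "adj (walk v a i) (walk v a m) \<longleftrightarrow> walk v a m \<in> {walk v a (i - 1), walk v a (Suc i)}"
    using walk_nbrs[of v a i] p i unfolding port_def by auto
  also have "\<dots> \<longleftrightarrow> (m = Suc i \<or> i = Suc m)"
  proof
    assume "walk v a m \<in> {walk v a (i - 1), walk v a (Suc i)}"
    then have "walk v a m = walk v a (i - 1) \<or> walk v a m = walk v a (Suc i)" by simp
    then show "m = Suc i \<or> i = Suc m"
    proof
      assume "walk v a m = walk v a (i - 1)"
      then have "m = i - 1" using inj_onD[OF inj] i m by auto
      then show ?thesis using m i by simp
    next
      assume h: "walk v a m = walk v a (Suc i)"
      show ?thesis
      proof (cases "Suc i = hh v a")
        case True then show ?thesis using h N mX disj by auto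
      next
        case False
        then have "m = Suc i" using inj_onD[OF inj h] i m by auto
        then show ?thesis by simp
      qed
    qed
  next
    assume "m = Suc i \<or> i = Suc m"
    then show "walk v a m \<in> {walk v a (i - 1), walk v a (Suc i)}" by auto
  qed
  finally show ?thesis .
qed

lemma nbr_of_seg:
  assumes p: "port v a" and i: "0 < i" "i < hh v a" and u: "adj (walk v a i) u"
  shows "u = walk v a (i - 1) \<or> u = walk v a (Suc i)"
  using walk_nbrs[of v a i] p i u unfolding port_def by auto

lemma sset_closed:
  assumes p: "port v a" and x: "x \<in> sset v a" and xz: "adj x z" and z: "z \<in> X"
  shows "z \<in> sset v a"
proof -
  obtain i where i: "0 < i" "i < hh v a" "x = walk v a i" using x unfolding sset_def by (auto simp: Suc_le_eq)
  have "z = walk v a (i - 1) \<or> z = walk v a (Suc i)" using nbr_of_seg[OF p i(1,2)] xz i by simp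
  then show ?thesis
  proof
    assume h: "z = walk v a (i - 1)"
    have "i - 1 \<noteq> 0" using h z p disj unfolding port_def by auto
    then show ?thesis using h i unfolding sset_def by (auto intro!: image_eqI[of _ _ "i - 1"])
  next
    assume h: "z = walk v a (Suc i)"
    have "Suc i \<noteq> hh v a" using h z hh_props(2)[OF p] disj by auto
    then show ?thesis using h i unfolding sset_def by (auto intro!: image_eqI[of _ _ "Suc i"])
  qed
qed

lemma Nn_nbr_seg:
  assumes p: "port v a" and i: "0 < i" "i < hh v a" and u: "adj (walk v a i) u" and uN: "u \<in> Nn"
  shows "(i = 1 \<and> u = v) \<or> (i = hh v a - 1 \<and> u = endv v a)"
proof -
  have "u = walk v a (i - 1) \<or> u = walk v a (Suc i)" using nbr_of_seg[OF p i u] .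
  then show ?thesis
  proof
    assume h: "u = walk v a (i - 1)"
    have "i - 1 = 0"
    proof (rule ccontr)
      assume "i - 1 \<noteq> 0"
      then have "walk v a (i - 1) \<in> X" using hh_props(3)[OF p, of "i - 1"] i by simp
      then show False using h uN disj by auto
    qed
    then show ?thesis using h i by simp
  next
    assume h: "u = walk v a (Suc i)"
    have "Suc i = hh v a"
    proof (rule ccontr)
      assume "Suc i \<noteq> hh v a"
      then have "walk v a (Suc i) \<in> X" using hh_props(3)[OF p, of "Suc i"] i by simp
      then show False using h uN disj by auto
    qed
    then show ?thesis using h i unfolding endv_def by auto
  qed
qed

lemma Nn_nbr_seg_conv:
  assumes p: "port v a" and i: "0 < i" "i < hh v a"
  shows "(i = 1 \<and> u = v) \<or> (i = hh v a - 1 \<and> u = endv v a) \<Longrightarrow> adj (walk v a i) u"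
  using walk_adj[of v a 0] walk_adj[of v a "hh v a - 1"] p i sym unfolding port_def endv_def
  by (auto simp: Suc_diff_1)


lemma port_rev: assumes p: "port v a" shows "port (endv v a) (lst v a)"
proof -
  have "adj (walk v a (hh v a - 1)) (walk v a (hh v a))"
    using walk_adj[of v a "hh v a - 1"] p hh_props(1)[OF p] unfolding port_def by simp
  then show ?thesis using hh_props(2)[OF p] sym unfolding port_def endv_def lst_def by blast
qed

lemma rev_walk:
  assumes p: "port v a"
  shows "k \<le> hh v a \<Longrightarrow> walk (endv v a) (lst v a) k = walk v a (hh v a - k)"
proof (induction k rule: less_induct)
  case (less k)
  show ?case
  proof (cases k)
    case 0 then show ?thesis by (simp add: endv_def)
  next
    case (Suc k1)
    show ?thesis
    proof (cases k1)
      case 0 then show ?thesis using Suc by (simp add: lst_def)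
    next
      case (Suc m)
      have k: "k = Suc (Suc m)" using \<open>k = Suc k1\<close> Suc by simp
      define i where "i = hh v a - Suc m"
      have i0: "0 < i" using less.prems k unfolding i_def by simp
      have ih1: "walk (endv v a) (lst v a) (Suc m) = walk v a i"
        using less.IH[of "Suc m"] less.prems k unfolding i_def by simp
      have ih2: "walk (endv v a) (lst v a) m = walk v a (Suc i)"
        using less.IH[of m] less.prems k unfolding i_def by (simp add: Suc_diff_Suc)
      have va: "adj v a" using p unfolding port_def by simp
      have a1: "adj (walk v a i) (walk v a (Suc i))" using walk_adj[OF va] .
      obtain i' where i': "i = Suc i'" using i0 by (cases i) auto
      have a2: "adj (walk v a i) (walk v a i')" using walk_adj[OF va, of i'] sym i' by simp
      have ne: "walk v a i' \<noteq> walk v a (Suc i)" using walk_nb[OF va, of i'] i' by simp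
      have "walk (endv v a) (lst v a) k = oth (walk v a i) (walk v a (Suc i))"
        using k ih1 ih2 by (simp add: walkSS)
      also have "\<dots> = walk v a i'" using oth_unique[OF a1 a2 ne] by simp
      also have "i' = hh v a - k" using i' k unfolding i_def by simp
      finally show ?thesis .
    qed
  qed
qed

lemma hh_rev: assumes p: "port v a" shows "hh (endv v a) (lst v a) = hh v a"
  unfolding hh_def[of "endv v a"]
proof (rule Least_equality)
  show "0 < hh v a \<and> walk (endv v a) (lst v a) (hh v a) \<in> Nn"
    using rev_walk[OF p, of "hh v a"] hh_props[OF p] p unfolding port_def by simp
next
  fix k assume k: "0 < k \<and> walk (endv v a) (lst v a) k \<in> Nn"
  show "hh v a \<le> k"
  proof (rule ccontr)
    assume "\<not> hh v a \<le> k"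
    then have "walk (endv v a) (lst v a) k = walk v a (hh v a - k)" using rev_walk[OF p, of k] by simp
    moreover have "walk v a (hh v a - k) \<in> X" using hh_props(3)[OF p, of "hh v a - k"] k \<open>\<not> hh v a \<le> k\<close> by simp
    ultimately show False using k disj by auto
  qed
qed

lemma endv_rev: "port v a \<Longrightarrow> endv (endv v a) (lst v a) = v"
  using rev_walk[of v a "hh v a"] hh_rev[of v a] unfolding endv_def[of "endv v a"] by simp

lemma lst_rev: "port v a \<Longrightarrow> lst (endv v a) (lst v a) = a"
  using rev_walk[of v a "hh v a - 1"] hh_rev[of v a] hh_props(4)[of v a]
  unfolding lst_def[of "endv v a"] by simp

lemma sset_rev: assumes p: "port v a" shows "sset (endv v a) (lst v a) = sset v a"
proof -
  have "sset (endv v a) (lst v a) = (\<lambda>k. walk v a (hh v a - k)) ` {1..<hh v a}"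
    unfolding sset_def hh_rev[OF p] using rev_walk[OF p] by (intro image_cong) auto
  also have "\<dots> = walk v a ` ((\<lambda>k. hh v a - k) ` {1..<hh v a})" by (simp add: image_image)
  also have "(\<lambda>k. hh v a - k) ` {1..<hh v a} = {1..<hh v a}"
  proof
    show "(\<lambda>k. hh v a - k) ` {1..<hh v a} \<subseteq> {1..<hh v a}" by auto
    show "{1..<hh v a} \<subseteq> (\<lambda>k. hh v a - k) ` {1..<hh v a}"
    proof
      fix k assume "k \<in> {1..<hh v a}"
      then show "k \<in> (\<lambda>k. hh v a - k) ` {1..<hh v a}" by (intro image_eqI[of _ _ "hh v a - k"]) auto
    qed
  qed
  finally show ?thesis unfolding sset_def by simp
qed

definition RX :: "('a \<times> 'a) set" where "RX = {(x, z). adj x z \<and> x \<in> X \<and> z \<in> X}"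

lemma RX_sym: "(x, z) \<in> RX\<^sup>* \<Longrightarrow> (z, x) \<in> RX\<^sup>*"
proof (induction rule: rtrancl_induct)
  case base then show ?case by simp
next
  case (step y z)
  then have "(z, y) \<in> RX" unfolding RX_def using sym by auto
  then show ?case using step.IH by (rule converse_rtrancl_into_rtrancl)
qed

lemma sset_conn:
  assumes p: "port v a" and x: "x \<in> sset v a"
  shows "sset v a = {z. (x, z) \<in> RX\<^sup>*}"
proof
  show "{z. (x, z) \<in> RX\<^sup>*} \<subseteq> sset v a"
  proof
    fix z assume "z \<in> {z. (x, z) \<in> RX\<^sup>*}"
    then have "(x, z) \<in> RX\<^sup>*" by simp
    then show "z \<in> sset v a"
    proof (induction rule: rtrancl_induct)
      case base then show ?case using x .
    next
      case (step y z) then show ?case using sset_closed[OF p] unfolding RX_def by auto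
    qed
  qed
next
  have va: "adj v a" using p unfolding port_def by simp
  have w1: "(a, walk v a m) \<in> RX\<^sup>*" if "0 < m" "m < hh v a" for m
    using that
  proof (induction m)
    case 0 then show ?case by simp
  next
    case (Suc m)
    show ?case
    proof (cases m)
      case 0 then show ?thesis by simp
    next
      case (Suc m')
      have "(walk v a m, walk v a (Suc m)) \<in> RX"
        using walk_adj[OF va, of m] hh_props(3)[OF p, of m] hh_props(3)[OF p, of "Suc m"] Suc.prems Suc
        unfolding RX_def by auto
      then show ?thesis using Suc.IH Suc.prems Suc by (meson rtrancl_into_rtrancl zero_less_Suc Suc_lessD)
    qed
  qed
  obtain i where i: "0 < i" "i < hh v a" "x = walk v a i" using x unfolding sset_def by (auto simp: Suc_le_eq)
  have xa: "(x, a) \<in> RX\<^sup>*" using RX_sym[OF w1[OF i(1,2)]] i by simp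
  show "sset v a \<subseteq> {z. (x, z) \<in> RX\<^sup>*}"
  proof
    fix z assume "z \<in> sset v a"
    then obtain m where m: "0 < m" "m < hh v a" "z = walk v a m" unfolding sset_def by (auto simp: Suc_le_eq)
    show "z \<in> {z. (x, z) \<in> RX\<^sup>*}" using rtrancl_trans[OF xa w1[OF m(1,2)]] m by simp
  qed
qed

lemma same_seg:
  "port v a \<Longrightarrow> port u b \<Longrightarrow> x \<in> sset v a \<Longrightarrow> x \<in> sset u b \<Longrightarrow> sset v a = sset u b"
  using sset_conn by metis

lemma port_of_seg:
  assumes p: "port v a" and q: "port u y" and y: "y \<in> sset v a"
  shows "(u = v \<and> y = a) \<or> (u = endv v a \<and> y = lst v a)"
proof -
  obtain i where i: "0 < i" "i < hh v a" "y = walk v a i" using y unfolding sset_def by (auto simp: Suc_le_eq)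
  have "adj (walk v a i) u" using q i sym unfolding port_def by auto
  then have "(i = 1 \<and> u = v) \<or> (i = hh v a - 1 \<and> u = endv v a)"
    using Nn_nbr_seg[OF p i(1,2)] q unfolding port_def by auto
  then show ?thesis using i unfolding lst_def by auto
qed

lemma port_in_own: "port v a \<Longrightarrow> a \<in> sset v a" by (rule a_in_sset)

end

definition Pc :: "nat \<Rightarrow> nat \<Rightarrow> nat \<Rightarrow> real" where
  "Pc n i k = (if (k = Suc i \<or> i = Suc k) \<and> i < n \<and> k < n then 1 else 0)"

definition Wp :: "nat \<Rightarrow> nat \<Rightarrow> nat \<Rightarrow> nat \<Rightarrow> real" where
  "Wp n j i k = mpow {..<n} (Pc n) j i k"

definition Wc :: "nat \<Rightarrow> nat \<Rightarrow> real" where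
  "Wc n j = Wp n j 0 (n - 1)"

definition dst :: "nat \<Rightarrow> nat \<Rightarrow> nat" where
  "dst i k = (if i \<le> k then k - i else i - k)"

lemma Pc_sum:
  assumes "i < n"
  shows "(\<Sum>z<n. Pc n i z * f z) = (if 0 < i then f (i - 1) else 0) + (if Suc i < n then f (Suc i) else 0)"
proof -
  have "(\<Sum>z<n. Pc n i z * f z) = (\<Sum>z<n. (if 0 < i \<and> z = i - 1 then f z else 0) + (if Suc i < n \<and> z = Suc i then f z else 0))"
    using assms by (intro sum.cong) (auto simp: Pc_def)
  also have "\<dots> = (if 0 < i then f (i - 1) else 0) + (if Suc i < n then f (Suc i) else 0)"
    using assms by (simp add: sum.distrib sum.If_cases)
  finally show ?thesis .
qed

lemma Wp_Suc: "i < n \<Longrightarrow> Wp n (Suc j) i k = (if 0 < i then Wp n j (i - 1) k else 0) + (if Suc i < n then Wp n j (Suc i) k else 0)"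
  unfolding Wp_def by (simp add: mm_def Pc_sum lessThan_def[symmetric])

lemma Wp_dist:
  "i < n \<Longrightarrow> k < n \<Longrightarrow> (j < dst i k \<longrightarrow> Wp n j i k = 0) \<and> (j = dst i k \<longrightarrow> Wp n j i k = 1)"
proof (induction j arbitrary: i)
  case 0 then show ?case by (auto simp: Wp_def idm_def dst_def)
next
  case (Suc j)
  have r: "Wp n (Suc j) i k = (if 0 < i then Wp n j (i - 1) k else 0) + (if Suc i < n then Wp n j (Suc i) k else 0)"
    using Wp_Suc Suc.prems by simp
  have A: "0 < i \<Longrightarrow> (j < dst (i - 1) k \<longrightarrow> Wp n j (i - 1) k = 0) \<and> (j = dst (i - 1) k \<longrightarrow> Wp n j (i - 1) k = 1)"
    using Suc.IH[of "i - 1"] Suc.prems by simp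
  have B: "Suc i < n \<Longrightarrow> (j < dst (Suc i) k \<longrightarrow> Wp n j (Suc i) k = 0) \<and> (j = dst (Suc i) k \<longrightarrow> Wp n j (Suc i) k = 1)"
    using Suc.IH[of "Suc i"] Suc.prems by simp
  show ?case
  proof (intro conjI impI)
    assume "Suc j < dst i k"
    then show "Wp n (Suc j) i k = 0" using r A B by (auto simp: dst_def split: if_splits)
  next
    assume h: "Suc j = dst i k"
    show "Wp n (Suc j) i k = 1"
    proof (cases "i < k")
      case True
      then have "Suc i < n" using Suc.prems by simp
      moreover have "0 < i \<Longrightarrow> j < dst (i - 1) k" using h True by (auto simp: dst_def)
      moreover have "j = dst (Suc i) k" using h True by (auto simp: dst_def)
      ultimately show ?thesis using r A B by auto
    next
      case False
      then have "k < i" using h by (auto simp: dst_def split: if_splits)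
      then have "0 < i" by simp
      moreover have "Suc i < n \<Longrightarrow> j < dst (Suc i) k" using h \<open>k < i\<close> by (auto simp: dst_def)
      moreover have "j = dst (i - 1) k" using h \<open>k < i\<close> by (auto simp: dst_def)
      ultimately show ?thesis using r A B by auto
    qed
  qed
qed

lemma Wc_zero: "Suc j < n \<Longrightarrow> Wc n j = 0"
  using Wp_dist[of 0 n "n - 1" j] unfolding Wc_def dst_def by auto

lemma Wc_one: "0 < n \<Longrightarrow> Wc n (n - 1) = 1"
  using Wp_dist[of 0 n "n - 1" "n - 1"] unfolding Wc_def dst_def by auto

lemma sum_by_value:
  fixes lg :: "'b \<Rightarrow> nat"
  assumes "finite P" "\<And>p. p \<in> P \<Longrightarrow> lg p < L"
  shows "(\<Sum>p\<in>P. h (lg p)) = (\<Sum>m<L. real (card {p\<in>P. lg p = m}) * h m)"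
  using sum.group[of P "{..<L}" lg "\<lambda>p. h (lg p)"] assms by (simp add: image_subset_iff)

lemma tri:
  fixes lg lg2 :: "'b \<Rightarrow> nat"
  assumes fP: "finite P" and fP': "finite P'"
    and pos: "\<And>p. p \<in> P \<Longrightarrow> 0 < lg p" and pos': "\<And>p. p \<in> P' \<Longrightarrow> 0 < lg2 p"
    and eq: "\<And>j. (\<Sum>p\<in>P. Wc (lg p) j) = (\<Sum>p\<in>P'. Wc (lg2 p) j)"
  shows "card {p\<in>P. lg p = l} = card {p\<in>P'. lg2 p = l}"
proof (induction l rule: less_induct)
  case (less l)
  show ?case
  proof (cases l)
    case 0
    have "{p\<in>P. lg p = l} = {}" "{p\<in>P'. lg2 p = l} = {}" using pos pos' 0 by fastforce+
    then show ?thesis by (simp only: card.empty)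
  next
    case (Suc l0)
    have split: "(\<Sum>p\<in>Q. Wc (f p) l0) = (\<Sum>m<l. real (card {p\<in>{p\<in>Q. f p < l}. f p = m}) * Wc m l0) + real (card {p\<in>Q. f p = l})"
      if fQ: "finite Q" and posQ: "\<And>p. p \<in> Q \<Longrightarrow> 0 < f p" for Q :: "'b set" and f
    proof -
      have "(\<Sum>p\<in>Q. Wc (f p) l0) = (\<Sum>p\<in>{p\<in>Q. f p < l}. Wc (f p) l0) + (\<Sum>p\<in>{p\<in>Q. \<not> f p < l}. Wc (f p) l0)"
      proof -
        have "Q = {p\<in>Q. f p < l} \<union> {p\<in>Q. \<not> f p < l}" by auto
        then have "(\<Sum>p\<in>Q. Wc (f p) l0) = (\<Sum>p\<in>{p\<in>Q. f p < l} \<union> {p\<in>Q. \<not> f p < l}. Wc (f p) l0)" by simp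
        also have "\<dots> = (\<Sum>p\<in>{p\<in>Q. f p < l}. Wc (f p) l0) + (\<Sum>p\<in>{p\<in>Q. \<not> f p < l}. Wc (f p) l0)"
          using fQ by (intro sum.union_disjoint) auto
        finally show ?thesis .
      qed
      also have "(\<Sum>p\<in>{p\<in>Q. \<not> f p < l}. Wc (f p) l0) = (\<Sum>p\<in>{p\<in>Q. \<not> f p < l}. if f p = l then 1 else 0)"
        using Wc_zero Wc_one[of "Suc l0"] Suc by (intro sum.cong refl) auto
      also have "\<dots> = real (card {p\<in>Q. f p = l})"
      proof -
        have "(\<Sum>p\<in>{p\<in>Q. \<not> f p < l}. if f p = l then 1 else 0) = (\<Sum>p\<in>{p\<in>Q. f p = l}. (1::real))"
          using fQ by (intro sum.mono_neutral_cong_right) auto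
        then show ?thesis by simp
      qed
      also have "(\<Sum>p\<in>{p\<in>Q. f p < l}. Wc (f p) l0) = (\<Sum>m<l. real (card {p\<in>{p\<in>Q. f p < l}. f p = m}) * Wc m l0)"
        using fQ by (intro sum_by_value) auto
      finally show ?thesis .
    qed
    have cards: "card {p\<in>{p\<in>P. lg p < l}. lg p = m} = card {p\<in>{p\<in>P'. lg2 p < l}. lg2 p = m}" if "m < l" for m
    proof -
      have "{p\<in>{p\<in>P. lg p < l}. lg p = m} = {p\<in>P. lg p = m}" "{p\<in>{p\<in>P'. lg2 p < l}. lg2 p = m} = {p\<in>P'. lg2 p = m}"
        using that by auto
      then show ?thesis using less.IH[OF that] by simp
    qed
    have "real (card {p\<in>P. lg p = l}) = real (card {p\<in>P'. lg2 p = l})"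
      using eq[of l0] split[OF fP pos] split[OF fP' pos'] cards by simp
    then show ?thesis by simp
  qed
qed


context tworeg
begin

definition TX :: "'a \<Rightarrow> 'a \<Rightarrow> real" where
  "TX x y = (if adj x y \<and> x \<in> X \<and> y \<in> X then 1 else 0)"

definition BB :: "'a \<Rightarrow> 'a \<Rightarrow> real" where
  "BB v x = (if adj v x then 1 else 0)"

lemma locality:
  assumes p: "port v a"
  shows "x \<in> sset v a \<Longrightarrow> y \<notin> sset v a \<Longrightarrow> mpow X TX j x y = 0"
proof (induction j arbitrary: x)
  case 0 then show ?case by (auto simp: idm_def)
next
  case (Suc j)
  have "TX x z * mpow X TX j z y = 0" for z
  proof (cases "adj x z \<and> x \<in> X \<and> z \<in> X")
    case True
    then have "z \<in> sset v a" using sset_closed[OF p Suc.prems(1)] by blast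
    then show ?thesis using Suc.IH Suc.prems by simp
  next
    case False then show ?thesis by (auto simp: TX_def)
  qed
  then show ?case unfolding mpow.simps mm_def by (intro sum.neutral) blast
qed

lemma seg_walks:
  assumes p: "port v a"
  shows "0 < i \<Longrightarrow> i < hh v a \<Longrightarrow> 0 < k \<Longrightarrow> k < hh v a \<Longrightarrow>
    mpow X TX j (walk v a i) (walk v a k) = Wp (hh v a - 1) j (i - 1) (k - 1)"
proof (induction j arbitrary: i)
  case 0
  have "walk v a i = walk v a k \<longleftrightarrow> i = k"
    using inj_onD[OF inj_sset[OF p], of i k] 0 by auto
  then show ?case using 0 by (auto simp: Wp_def idm_def)
next
  case (Suc j)
  let ?h = "hh v a"
  have ss: "sset v a \<subseteq> X" using sset_X[OF p] .
  have "mpow X TX (Suc j) (walk v a i) (walk v a k) = (\<Sum>z\<in>X. TX (walk v a i) z * mpow X TX j z (walk v a k))"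
    by (simp add: mm_def)
  also have "\<dots> = (\<Sum>z\<in>sset v a. TX (walk v a i) z * mpow X TX j z (walk v a k))"
  proof (rule sum.mono_neutral_right[OF finX ss])
    show "\<forall>z\<in>X - sset v a. TX (walk v a i) z * mpow X TX j z (walk v a k) = 0"
    proof
      fix z assume z: "z \<in> X - sset v a"
      have "walk v a i \<in> sset v a" using Suc.prems unfolding sset_def by auto
      then have "\<not> adj (walk v a i) z" using sset_closed[OF p] z by blast
      then show "TX (walk v a i) z * mpow X TX j z (walk v a k) = 0" by (simp add: TX_def)
    qed
  qed
  also have "\<dots> = (\<Sum>m\<in>{1..<?h}. TX (walk v a i) (walk v a m) * mpow X TX j (walk v a m) (walk v a k))"
    unfolding sset_def by (rule sum.reindex[OF inj_sset[OF p], unfolded comp_def])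
  also have "\<dots> = (\<Sum>m\<in>{1..<?h}. Pc (?h - 1) (i - 1) (m - 1) * Wp (?h - 1) j (m - 1) (k - 1))"
  proof (intro sum.cong refl)
    fix m assume m: "m \<in> {1..<?h}"
    have "TX (walk v a i) (walk v a m) = Pc (?h - 1) (i - 1) (m - 1)"
    proof -
      have "walk v a i \<in> X" "walk v a m \<in> X" using hh_props(3)[OF p] Suc.prems m by auto
      moreover have "adj (walk v a i) (walk v a m) \<longleftrightarrow> (m = Suc i \<or> i = Suc m)"
        using adj_in_seg[OF p, of i m] Suc.prems m by auto
      ultimately show ?thesis using Suc.prems m unfolding TX_def Pc_def by auto
    qed
    then show "TX (walk v a i) (walk v a m) * mpow X TX j (walk v a m) (walk v a k) =
      Pc (?h - 1) (i - 1) (m - 1) * Wp (?h - 1) j (m - 1) (k - 1)"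
      using Suc.IH[of m] Suc.prems m by auto
  qed
  also have "\<dots> = (\<Sum>m'<?h - 1. Pc (?h - 1) (i - 1) m' * Wp (?h - 1) j m' (k - 1))"
  proof -
    have e: "{1..<?h} = {Suc 0..<Suc (?h - 1)}" using hh_props(1)[OF p] by simp
    show ?thesis unfolding e sum.shift_bounds_Suc_ivl by (simp add: atLeast0LessThan)
  qed
  also have "\<dots> = Wp (?h - 1) (Suc j) (i - 1) (k - 1)"
    unfolding Wp_def by (simp add: mm_def)
  finally show ?case .
qed

lemma seg_Wc:
  assumes p: "port v a"
  shows "mpow X TX j a (lst v a) = Wc (hh v a - 1) j"
  using seg_walks[OF p, of 1 "hh v a - 1" j] hh_props[OF p] unfolding Wc_def lst_def
  by (simp add: numeral_2_eq_2)

definition Fv :: "nat \<Rightarrow> 'a \<Rightarrow> 'a \<Rightarrow> real" where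
  "Fv j v w = (\<Sum>x\<in>X. \<Sum>y\<in>X. BB v x * mpow X TX j x y * BB w y)"

lemma Fv_decomp:
  assumes v: "v \<in> Nn" and w: "w \<in> Nn" and vw: "v \<noteq> w"
  shows "Fv j v w = (\<Sum>x\<in>{x. adj v x \<and> endv v x = w}. Wc (hh v x - 1) j)"
proof -
  have inner: "(\<Sum>y\<in>X. mpow X TX j x y * BB w y) = (if endv v x = w then Wc (hh v x - 1) j else 0)"
    if vx: "adj v x" for x
  proof -
    have p: "port v x" using v vx unfolding port_def by simp
    have lX: "lst v x \<in> X" using hh_props(3)[OF p, of "hh v x - 1"] hh_props(4)[OF p] unfolding lst_def by simp
    have "(\<Sum>y\<in>X. mpow X TX j x y * BB w y) = (\<Sum>y\<in>X. if y = lst v x then (if endv v x = w then mpow X TX j x y else 0) else 0)"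
    proof (intro sum.cong refl)
      fix y assume yX: "y \<in> X"
      show "mpow X TX j x y * BB w y = (if y = lst v x then (if endv v x = w then mpow X TX j x y else 0) else 0)"
      proof (cases "adj w y")
        case False then show ?thesis
          using port_rev[OF p] sym unfolding BB_def port_def by auto
      next
        case True
        then have q: "port w y" using w unfolding port_def by simp
        show ?thesis
        proof (cases "y \<in> sset v x")
          case False then show ?thesis using locality[OF p a_in_sset[OF p] False] True
            using a_in_sset[OF p] lX by (auto simp: BB_def dest: a_in_sset)
        next
          case yin: True
          have "(w = v \<and> y = x) \<or> (w = endv v x \<and> y = lst v x)" using port_of_seg[OF p q yin] .
          then show ?thesis using vw True by (auto simp: BB_def)
        qed
      qed
    qed
    also have "\<dots> = (if endv v x = w then mpow X TX j x (lst v x) else 0)"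
      using finX lX by simp
    also have "\<dots> = (if endv v x = w then Wc (hh v x - 1) j else 0)"
      using seg_Wc[OF p] by simp
    finally show ?thesis .
  qed
  have "Fv j v w = (\<Sum>x\<in>X. BB v x * (\<Sum>y\<in>X. mpow X TX j x y * BB w y))"
    unfolding Fv_def by (simp add: sum_distrib_left mult.assoc)
  also have "\<dots> = (\<Sum>x\<in>X. if adj v x \<and> endv v x = w then Wc (hh v x - 1) j else 0)"
    using inner by (intro sum.cong refl) (auto simp: BB_def)
  also have "\<dots> = (\<Sum>x\<in>{x\<in>X. adj v x \<and> endv v x = w}. Wc (hh v x - 1) j)"
    by (rule sum.inter_filter[symmetric, OF finX])
  also have "{x\<in>X. adj v x \<and> endv v x = w} = {x. adj v x \<and> endv v x = w}"
    using port_X v unfolding port_def by blast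
  finally show ?thesis .
qed

end

lemma trace_cj:
  assumes S: "finite S" and o: "orth S M"
  shows "(\<Sum>u\<in>S. cj S M Z u u) = (\<Sum>u\<in>S. Z u u)"
proof -
  have "(\<Sum>u\<in>S. cj S M Z u u) = (\<Sum>u\<in>S. \<Sum>b\<in>S. \<Sum>a\<in>S. M a u * Z a b * M b u)"
    unfolding cj_def mm_def tr_def by (simp add: sum_distrib_right)
  also have "\<dots> = (\<Sum>b\<in>S. \<Sum>u\<in>S. \<Sum>a\<in>S. M a u * Z a b * M b u)"
    by (rule sum.swap)
  also have "\<dots> = (\<Sum>b\<in>S. \<Sum>a\<in>S. \<Sum>u\<in>S. M a u * Z a b * M b u)"
    by (rule sum.cong[OF refl], rule sum.swap)
  also have "\<dots> = (\<Sum>b\<in>S. \<Sum>a\<in>S. Z a b * mm S M (tr M) a b)"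
    unfolding mm_def tr_def by (simp add: sum_distrib_left mult.commute mult.left_commute)
  also have "\<dots> = (\<Sum>b\<in>S. \<Sum>a\<in>S. Z a b * idm a b)"
    using o unfolding orth_def by simp
  also have "\<dots> = (\<Sum>b\<in>S. Z b b)"
  proof (intro sum.cong refl)
    fix b assume "b \<in> S"
    have "(\<Sum>a\<in>S. Z a b * idm a b) = (\<Sum>a\<in>S. if a = b then Z a b else 0)"
      by (intro sum.cong refl) (simp add: idm_def)
    then show "(\<Sum>a\<in>S. Z a b * idm a b) = Z b b" using S \<open>b \<in> S\<close> by simp
  qed
  finally show ?thesis .
qed

lemma wcs:
  fixes w x :: "'b \<Rightarrow> real"
  assumes I: "finite I" and w: "\<And>i. i \<in> I \<Longrightarrow> 0 \<le> w i"
  shows "(\<Sum>i\<in>I. w i * x i)\<^sup>2 \<le> (\<Sum>i\<in>I. w i) * (\<Sum>i\<in>I. w i * (x i)\<^sup>2)"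
proof -
  let ?A = "\<Sum>i\<in>I. w i" and ?B = "\<Sum>i\<in>I. w i * (x i)\<^sup>2" and ?C = "\<Sum>i\<in>I. w i * x i"
  have "0 \<le> (\<Sum>i\<in>I. \<Sum>j\<in>I. w i * w j * (x i - x j)\<^sup>2)"
    using w by (intro sum_nonneg) auto
  also have "(\<Sum>i\<in>I. \<Sum>j\<in>I. w i * w j * (x i - x j)\<^sup>2) =
      (\<Sum>i\<in>I. \<Sum>j\<in>I. (w i * (x i)\<^sup>2) * w j) + (\<Sum>i\<in>I. \<Sum>j\<in>I. w i * (w j * (x j)\<^sup>2))
      - 2 * (\<Sum>i\<in>I. \<Sum>j\<in>I. (w i * x i) * (w j * x j))"
    by (simp add: power2_diff sum.distrib sum_subtractf sum_distrib_left sum_distrib_right algebra_simps)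
  also have "(\<Sum>i\<in>I. \<Sum>j\<in>I. (w i * (x i)\<^sup>2) * w j) = ?B * ?A" by (rule sum_product[symmetric])
  also have "(\<Sum>i\<in>I. \<Sum>j\<in>I. w i * (w j * (x j)\<^sup>2)) = ?A * ?B" by (rule sum_product[symmetric])
  also have "(\<Sum>i\<in>I. \<Sum>j\<in>I. (w i * x i) * (w j * x j)) = ?C * ?C" by (rule sum_product[symmetric])
  finally show ?thesis by (simp add: power2_eq_square algebra_simps)
qed


lemma norm_pres:
  assumes S: "finite S" and o: "\<And>a c. a \<in> S \<Longrightarrow> c \<in> S \<Longrightarrow> (\<Sum>u\<in>S. M a u * M c u) = idm a c"
  shows "(\<Sum>u\<in>S. (\<Sum>a\<in>S. M a u * y a)\<^sup>2) = (\<Sum>a\<in>S. (y a)\<^sup>2)"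
proof -
  have "(\<Sum>u\<in>S. (\<Sum>a\<in>S. M a u * y a)\<^sup>2) = (\<Sum>u\<in>S. \<Sum>a\<in>S. \<Sum>c\<in>S. (M a u * y a) * (M c u * y c))"
    by (simp add: power2_eq_square sum_product)
  also have "\<dots> = (\<Sum>a\<in>S. \<Sum>u\<in>S. \<Sum>c\<in>S. (M a u * y a) * (M c u * y c))"
    by (rule sum.swap)
  also have "\<dots> = (\<Sum>a\<in>S. \<Sum>c\<in>S. \<Sum>u\<in>S. (M a u * y a) * (M c u * y c))"
    by (rule sum.cong[OF refl], rule sum.swap)
  also have "\<dots> = (\<Sum>a\<in>S. \<Sum>c\<in>S. y a * y c * (\<Sum>u\<in>S. M a u * M c u))"
    by (simp add: sum_distrib_left algebra_simps)
  also have "\<dots> = (\<Sum>a\<in>S. \<Sum>c\<in>S. if a = c then y a * y c else 0)"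
    using o by (intro sum.cong refl) (simp add: idm_def)
  also have "\<dots> = (\<Sum>a\<in>S. (y a)\<^sup>2)"
    using S by (simp add: power2_eq_square)
  finally show ?thesis .
qed

lemma orth_rows: "orth S M \<Longrightarrow> a \<in> S \<Longrightarrow> c \<in> S \<Longrightarrow> (\<Sum>u\<in>S. M a u * M c u) = idm a c"
  unfolding orth_def mm_def tr_def by simp

lemma orth_cols: "orth S M \<Longrightarrow> a \<in> S \<Longrightarrow> c \<in> S \<Longrightarrow> (\<Sum>u\<in>S. M u a * M u c) = idm a c"
  unfolding orth_def mm_def tr_def by simp

lemma cj_sym:
  assumes "\<And>a b. A a b = A b a"
  shows "cj S M A u w = cj S M A w u"
proof -
  have "cj S M A u w = (\<Sum>b\<in>S. \<Sum>a\<in>S. M a u * A a b * M b w)"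
    unfolding cj_def mm_def tr_def by (simp add: sum_distrib_right)
  also have "\<dots> = (\<Sum>a\<in>S. \<Sum>b\<in>S. M a u * A a b * M b w)" by (rule sum.swap)
  also have "\<dots> = (\<Sum>a\<in>S. \<Sum>b\<in>S. M b w * A b a * M a u)"
    using assms by (simp add: mult.commute mult.left_commute)
  also have "\<dots> = cj S M A w u"
    unfolding cj_def mm_def tr_def by (simp add: sum_distrib_right)
  finally show ?thesis .
qed

lemma deg2_transfer:
  assumes S: "finite S" and o: "orth S M"
    and B: "\<And>u w. u \<in> S \<Longrightarrow> w \<in> S \<Longrightarrow> B u w = cj S M A u w"
    and A01: "\<And>u w. A u w = 0 \<or> A u w = 1" and Asym: "\<And>u w. A u w = A w u"
    and Adeg: "\<And>u. u \<in> S \<Longrightarrow> (\<Sum>w\<in>S. A u w) = 2"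
    and B01: "\<And>u w. B u w = 0 \<or> B u w = 1"
    and u: "u \<in> S"
  shows "(\<Sum>w\<in>S. B u w) = 2"
proof -
  define d where "d u = (\<Sum>w\<in>S. B u w)" for u
  have sq: "B u w * B u w = B u w" "A u w * A u w = A u w" for u w using A01[of u w] B01[of u w] by auto
  have a: "(\<Sum>u\<in>S. d u) = 2 * real (card S)"
  proof -
    have "(\<Sum>u\<in>S. d u) = (\<Sum>u\<in>S. mm S B B u u)"
      unfolding d_def mm_def using B cj_sym[of A S M] Asym sq by (intro sum.cong refl) (metis (no_types, lifting))
    also have "\<dots> = (\<Sum>u\<in>S. cj S M (mm S A A) u u)"
    proof (intro sum.cong refl)
      fix u assume "u \<in> S"
      have "mm S B B u u = mm S (cj S M A) (cj S M A) u u"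
        using B \<open>u \<in> S\<close> by (intro mm_cong) auto
      then show "mm S B B u u = cj S M (mm S A A) u u" using cj_mm[OF S o \<open>u \<in> S\<close> \<open>u \<in> S\<close>] by simp
    qed
    also have "\<dots> = (\<Sum>u\<in>S. mm S A A u u)" by (rule trace_cj[OF S o])
    also have "\<dots> = (\<Sum>u\<in>S. 2)" unfolding mm_def using Adeg Asym sq by (intro sum.cong refl) (metis (no_types, lifting) sum.cong)
    finally show ?thesis by simp
  qed
  define m where "m b = (\<Sum>w\<in>S. M b w)" for b
  define y where "y a = (\<Sum>b\<in>S. A a b * m b)" for a
  have dM: "d u = (\<Sum>a\<in>S. M a u * y a)" if "u \<in> S" for u
  proof -
    have "d u = (\<Sum>w\<in>S. \<Sum>b\<in>S. \<Sum>a\<in>S. M a u * A a b * M b w)"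
      unfolding d_def using B that by (intro sum.cong refl) (simp add: cj_def mm_def tr_def sum_distrib_right)
    also have "\<dots> = (\<Sum>b\<in>S. \<Sum>w\<in>S. \<Sum>a\<in>S. M a u * A a b * M b w)" by (rule sum.swap)
    also have "\<dots> = (\<Sum>b\<in>S. \<Sum>a\<in>S. \<Sum>w\<in>S. M a u * A a b * M b w)" by (rule sum.cong[OF refl], rule sum.swap)
    also have "\<dots> = (\<Sum>a\<in>S. \<Sum>b\<in>S. \<Sum>w\<in>S. M a u * A a b * M b w)" by (rule sum.swap)
    also have "\<dots> = (\<Sum>a\<in>S. M a u * y a)"
      unfolding y_def m_def by (simp add: sum_distrib_left mult.assoc)
    finally show ?thesis .
  qed
  have b: "(\<Sum>u\<in>S. (d u)\<^sup>2) \<le> 4 * real (card S)"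
  proof -
    have "(\<Sum>u\<in>S. (d u)\<^sup>2) = (\<Sum>u\<in>S. (\<Sum>a\<in>S. M a u * y a)\<^sup>2)" using dM by simp
    also have "\<dots> = (\<Sum>a\<in>S. (y a)\<^sup>2)" using norm_pres[OF S orth_rows[OF o]] by simp
    also have "\<dots> \<le> (\<Sum>a\<in>S. (\<Sum>b\<in>S. A a b) * (\<Sum>b\<in>S. A a b * (m b)\<^sup>2))"
      unfolding y_def using A01 by (intro sum_mono wcs[OF S]) (metis order_refl zero_le_one)
    also have "\<dots> = (\<Sum>a\<in>S. 2 * (\<Sum>b\<in>S. A a b * (m b)\<^sup>2))" using Adeg by simp
    also have "\<dots> = 2 * (\<Sum>b\<in>S. \<Sum>a\<in>S. A a b * (m b)\<^sup>2)"
      by (simp add: sum_distrib_left) (rule sum.swap)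
    also have "\<dots> = 2 * (\<Sum>b\<in>S. 2 * (m b)\<^sup>2)"
    proof -
      have "(\<Sum>a\<in>S. A a b * (m b)\<^sup>2) = 2 * (m b)\<^sup>2" if "b \<in> S" for b
        using Adeg[OF that] Asym by (simp add: sum_distrib_right[symmetric])
      then show ?thesis by simp
    qed
    also have "\<dots> = 4 * (\<Sum>b\<in>S. (m b)\<^sup>2)" by (simp add: sum_distrib_left[symmetric])
    also have "(\<Sum>b\<in>S. (m b)\<^sup>2) = (\<Sum>b\<in>S. (\<Sum>w\<in>S. M b w * 1)\<^sup>2)" unfolding m_def by simp
    also have "\<dots> = (\<Sum>w\<in>S. (1::real)\<^sup>2)"
      using norm_pres[OF S, of "\<lambda>w b. M b w" "\<lambda>_. 1"] orth_cols[OF o] by simp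
    finally show ?thesis by simp
  qed
  have c: "(\<Sum>u\<in>S. (d u - 2)\<^sup>2) = (\<Sum>u\<in>S. (d u)\<^sup>2) - 4 * (\<Sum>u\<in>S. d u) + 4 * real (card S)"
    by (simp add: power2_diff sum.distrib sum_subtractf sum_distrib_left sum_distrib_right algebra_simps)
  have "(\<Sum>u\<in>S. (d u - 2)\<^sup>2) \<le> 0" using a b c by simp
  then have "(\<Sum>u\<in>S. (d u - 2)\<^sup>2) = 0" by (simp add: antisym sum_nonneg)
  then have "(d u - 2)\<^sup>2 = 0" using sum_nonneg_eq_0_iff[OF S, of "\<lambda>u. (d u - 2)\<^sup>2"] u by simp
  then show ?thesis unfolding d_def by simp
qed


lemma e2:
  assumes S: "finite S" and o: "orth S M"
    and B: "\<And>u w. u \<in> S \<Longrightarrow> w \<in> S \<Longrightarrow> B u w = cj S M A u w"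
    and Bnn: "\<And>u w. 0 \<le> B u w" and Bsym: "\<And>u w. B u w = B w u"
    and Bdeg: "\<And>u. u \<in> S \<Longrightarrow> (\<Sum>w\<in>S. B u w) = 2"
    and C: "C \<subseteq> S" and Ceig: "\<And>u. u \<in> S \<Longrightarrow> (\<Sum>w\<in>C. A u w) = (if u \<in> C then 2 else 0)"
    and v: "v \<in> C" and Mv: "\<And>a. a \<in> S \<Longrightarrow> M a v = (if a = v then \<sigma> else 0)" and sg: "\<sigma> * \<sigma> = 1"
    and C': "C' \<subseteq> S" and conn: "\<And>c. c \<in> C' \<Longrightarrow> (v, c) \<in> {(x, y). x \<in> S \<and> y \<in> S \<and> 0 < B x y}\<^sup>*"
  shows "card C' \<le> card C"
proof -
  define e where "e a (y::'a) = (if a \<in> C then (1::real) else 0)" for a y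
  define z where "z u = mm S (tr M) e u u" for u
  have fC: "finite C" using C S finite_subset by blast
  have Ae: "mm S A e u y = 2 * e u y" if "u \<in> S" for u y
  proof -
    have "mm S A e u y = (\<Sum>w\<in>S. if w \<in> C then A u w else 0)"
      unfolding mm_def e_def by (intro sum.cong refl) auto
    also have "\<dots> = (\<Sum>w\<in>C. A u w)" using S C by (simp add: sum.If_cases Int_absorb1)
    finally show ?thesis using Ceig[OF that] unfolding e_def by simp
  qed
  have Bz: "(\<Sum>w\<in>S. B u w * z w) = 2 * z u" if u: "u \<in> S" for u
  proof -
    have zz: "z w = mm S (tr M) e w u" for w unfolding z_def mm_def e_def by simp
    have "(\<Sum>w\<in>S. B u w * z w) = mm S (cj S M A) (mm S (tr M) e) u u"
      unfolding mm_def zz[unfolded mm_def] using B u by (intro sum.cong refl) auto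
    also have "\<dots> = mm S (mm S (tr M) A) (mm S (mm S M (tr M)) e) u u"
      unfolding cj_def using S by (simp add: mm_assoc)
    also have "\<dots> = mm S (mm S (tr M) A) (mm S idm e) u u"
    proof (rule mm_cong[OF refl])
      fix w assume "w \<in> S"
      show "mm S (mm S M (tr M)) e w u = mm S idm e w u"
        using o \<open>w \<in> S\<close> unfolding orth_def by (intro mm_cong refl) simp
    qed
    also have "\<dots> = mm S (mm S (tr M) A) e u u"
      using S by (intro mm_cong[OF refl]) (simp add: mm_idm_left)
    also have "\<dots> = mm S (tr M) (mm S A e) u u" using S by (simp add: mm_assoc)
    also have "\<dots> = mm S (tr M) (\<lambda>a y. 2 * e a y) u u"
      using Ae by (intro mm_cong[OF refl]) auto
    also have "\<dots> = 2 * z u" unfolding z_def mm_def by (simp add: sum_distrib_left mult.left_commute)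
    finally show ?thesis .
  qed
  have zsq: "(\<Sum>u\<in>S. (z u)\<^sup>2) = real (card C)"
  proof -
    have "(\<Sum>u\<in>S. (z u)\<^sup>2) = (\<Sum>u\<in>S. (\<Sum>a\<in>S. M a u * e a u)\<^sup>2)"
      unfolding z_def mm_def tr_def by simp
    also have "\<dots> = (\<Sum>a\<in>S. (e a a)\<^sup>2)"
      using norm_pres[OF S orth_rows[OF o], of "\<lambda>a. e a a"] unfolding e_def by simp
    also have "\<dots> = (\<Sum>a\<in>S. if a \<in> C then 1 else 0)" unfolding e_def by (intro sum.cong refl) auto
    also have "\<dots> = real (card C)" using S C by (simp add: sum.If_cases Int_absorb1)
    finally show ?thesis .
  qed
  have quad: "(\<Sum>u\<in>S. \<Sum>w\<in>S. B u w * (z u - z w)\<^sup>2) = 0"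
  proof -
    have "(\<Sum>u\<in>S. \<Sum>w\<in>S. B u w * (z u - z w)\<^sup>2) =
      (\<Sum>u\<in>S. (z u)\<^sup>2 * (\<Sum>w\<in>S. B u w)) + (\<Sum>u\<in>S. \<Sum>w\<in>S. B u w * (z w)\<^sup>2) - 2 * (\<Sum>u\<in>S. z u * (\<Sum>w\<in>S. B u w * z w))"
      by (simp add: power2_diff sum.distrib sum_subtractf sum_distrib_left sum_distrib_right algebra_simps)
    also have "(\<Sum>u\<in>S. \<Sum>w\<in>S. B u w * (z w)\<^sup>2) = (\<Sum>w\<in>S. \<Sum>u\<in>S. B u w * (z w)\<^sup>2)" by (rule sum.swap)
    also have "\<dots> = (\<Sum>w\<in>S. (z w)\<^sup>2 * (\<Sum>u\<in>S. B w u))"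
      using Bsym by (simp add: sum_distrib_left sum_distrib_right mult.commute)
    also have "(\<Sum>u\<in>S. z u * (\<Sum>w\<in>S. B u w * z w)) = (\<Sum>u\<in>S. 2 * (z u)\<^sup>2)"
      using Bz by (intro sum.cong refl) (simp add: power2_eq_square)
    finally show ?thesis using Bdeg by (simp add: sum_distrib_left[symmetric] sum_distrib_right[symmetric] mult.commute)
  qed
  have edge: "z u = z w" if "u \<in> S" "w \<in> S" "0 < B u w" for u w
  proof -
    have "\<forall>u\<in>S. (\<Sum>w\<in>S. B u w * (z u - z w)\<^sup>2) = 0"
      using sum_nonneg_eq_0_iff[OF S, of "\<lambda>u. \<Sum>w\<in>S. B u w * (z u - z w)\<^sup>2"] quad Bnn
      by (simp add: sum_nonneg)
    then have "(\<Sum>w\<in>S. B u w * (z u - z w)\<^sup>2) = 0" using that by blast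
    then have "B u w * (z u - z w)\<^sup>2 = 0"
      using sum_nonneg_eq_0_iff[OF S, of "\<lambda>w. B u w * (z u - z w)\<^sup>2"] Bnn that by force
    then show ?thesis using that by simp
  qed
  have zv: "z v = \<sigma>"
  proof -
    have vS: "v \<in> S" using v C by blast
    have "z v = (\<Sum>a\<in>S. M a v * e a v)" unfolding z_def mm_def tr_def by simp
    also have "\<dots> = (\<Sum>a\<in>S. if a = v then \<sigma> else 0)"
      using Mv v unfolding e_def by (intro sum.cong refl) auto
    finally show ?thesis using S vS by simp
  qed
  have zc: "z c = \<sigma>" if "c \<in> C'" for c
  proof -
    have "(v, c) \<in> {(x, y). x \<in> S \<and> y \<in> S \<and> 0 < B x y}\<^sup>*" using conn[OF that] .
    then show ?thesis
    proof (induction rule: rtrancl_induct)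
      case base then show ?case using zv .
    next
      case (step y c) then show ?case using edge by auto
    qed
  qed
  have "real (card C') = (\<Sum>c\<in>C'. (z c)\<^sup>2)" using zc sg by (simp add: power2_eq_square)
  also have "\<dots> \<le> (\<Sum>u\<in>S. (z u)\<^sup>2)" using C' S by (intro sum_mono2) auto
  finally show ?thesis using zsq by simp
qed

context tworeg
begin

lemma seg_same_lab:
  assumes p: "port v a" and q: "port u b" and e: "sset u b = sset v a"
  shows "({u, endv u b}, hh u b) = ({v, endv v a}, hh v a)"
proof -
  have "b \<in> sset v a" using a_in_sset[OF q] e by simp
  then have "(u = v \<and> b = a) \<or> (u = endv v a \<and> b = lst v a)" using port_of_seg[OF p q] by simp
  then show ?thesis
  proof
    assume "u = v \<and> b = a" then show ?thesis by simp
  next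
    assume h: "u = endv v a \<and> b = lst v a"
    then show ?thesis using endv_rev[OF p] hh_rev[OF p] by auto
  qed
qed

definition Seg :: "'a set set" where "Seg = {sset v a | v a. port v a}"

definition lab :: "'a set \<Rightarrow> 'a set \<times> nat" where
  "lab S = (SOME L. \<exists>v a. port v a \<and> sset v a = S \<and> L = ({v, endv v a}, hh v a))"

lemma lab_eq: assumes p: "port v a" shows "lab (sset v a) = ({v, endv v a}, hh v a)"
  unfolding lab_def
proof (rule someI2[of _ "({v, endv v a}, hh v a)"])
  show "\<exists>u b. port u b \<and> sset u b = sset v a \<and> ({v, endv v a}, hh v a) = ({u, endv u b}, hh u b)"
    using p by blast
next
  fix L assume "\<exists>u b. port u b \<and> sset u b = sset v a \<and> L = ({u, endv u b}, hh u b)"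
  then show "L = ({v, endv v a}, hh v a)" using seg_same_lab[OF p] by blast
qed

lemma fin_Seg: "finite Seg"
proof -
  have "Seg \<subseteq> Pow X" unfolding Seg_def using sset_X by blast
  then show ?thesis using finX finite_subset by blast
qed

lemma endv_N: "port v a \<Longrightarrow> endv v a \<in> Nn"
  using hh_props(2) unfolding endv_def by blast

lemma count_nonloop:
  assumes v: "v \<in> Nn" and w: "w \<in> Nn" and vw: "v \<noteq> w"
  shows "card {S\<in>Seg. lab S = ({v, w}, l)} = card {x. adj v x \<and> endv v x = w \<and> hh v x = l}"
proof -
  let ?P = "{x. adj v x \<and> endv v x = w \<and> hh v x = l}"
  have "bij_betw (sset v) ?P {S\<in>Seg. lab S = ({v, w}, l)}"
    unfolding bij_betw_def
  proof (intro conjI)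
    show "inj_on (sset v) ?P"
    proof (rule inj_onI)
      fix x1 x2 assume x1: "x1 \<in> ?P" and x2: "x2 \<in> ?P" and e: "sset v x1 = sset v x2"
      have p1: "port v x1" and p2: "port v x2" using x1 x2 v unfolding port_def by auto
      have "x2 \<in> sset v x1" using a_in_sset[OF p2] e by simp
      then have "(v = v \<and> x2 = x1) \<or> (v = endv v x1 \<and> x2 = lst v x1)" using port_of_seg[OF p1 p2] by simp
      then show "x1 = x2" using x1 vw by auto
    qed
    show "sset v ` ?P = {S\<in>Seg. lab S = ({v, w}, l)}"
    proof
      show "sset v ` ?P \<subseteq> {S\<in>Seg. lab S = ({v, w}, l)}"
      proof
        fix S assume "S \<in> sset v ` ?P"
        then obtain x where x: "x \<in> ?P" "S = sset v x" by blast
        have p: "port v x" using x v unfolding port_def by auto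
        show "S \<in> {S\<in>Seg. lab S = ({v, w}, l)}" using x lab_eq[OF p] p unfolding Seg_def by auto
      qed
    next
      show "{S\<in>Seg. lab S = ({v, w}, l)} \<subseteq> sset v ` ?P"
      proof
        fix S assume S: "S \<in> {S\<in>Seg. lab S = ({v, w}, l)}"
        then obtain u b where q: "port u b" "S = sset u b" unfolding Seg_def by auto
        have L: "{u, endv u b} = {v, w}" "hh u b = l" using lab_eq[OF q(1)] S q(2) by auto
        show "S \<in> sset v ` ?P"
        proof (cases "u = v")
          case True
          then have "endv u b = w" using L vw by (metis doubleton_eq_iff)
          then show ?thesis using q L True unfolding port_def by auto
        next
          case False
          then have uw: "u = w" "endv u b = v" using L by (metis doubleton_eq_iff)+
          have pr: "port v (lst u b)" using port_rev[OF q(1)] uw by simp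
          have "lst u b \<in> ?P"
            using pr endv_rev[OF q(1)] hh_rev[OF q(1)] uw L unfolding port_def by auto
          moreover have "S = sset v (lst u b)" using sset_rev[OF q(1)] uw q(2) by simp
          ultimately show ?thesis by blast
        qed
      qed
    qed
  qed
  from bij_betw_same_card[OF this] show ?thesis by simp
qed

lemma loop_nbrs:
  assumes p: "port v a" and e: "endv v a = v"
  shows "{x. adj v x} = {a, lst v a}" "a \<noteq> lst v a"
proof -
  have va: "adj v a" using p unfolding port_def by simp
  have vl: "adj v (lst v a)" using port_rev[OF p] e unfolding port_def by simp
  show ne: "a \<noteq> lst v a"
  proof
    assume h: "a = lst v a"
    have "hh v a - 1 = 1"
      using inj_onD[OF inj_sset[OF p], of 1 "hh v a - 1"] h hh_props(4)[OF p] unfolding lst_def by (auto simp: Suc_le_eq)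
    then have "hh v a = 2" by simp
    then have "walk v a 2 = v" using e unfolding endv_def by simp
    moreover have "walk v a 2 \<noteq> walk v a 0" using walk_nb[OF va, of 0] by (simp add: numeral_2_eq_2)
    ultimately show False by simp
  qed
  have "{x. adj v x} = {a, oth v a}" using nbrs_oth[OF va] .
  moreover have "lst v a = oth v a" using oth_unique[OF va vl] ne by simp
  ultimately show "{x. adj v x} = {a, lst v a}" by simp
qed

lemma lst_in_sset: "port v a \<Longrightarrow> lst v a \<in> sset v a"
  unfolding lst_def sset_def using hh_props(4)[of v a] by (intro imageI) auto

lemma count_loop:
  assumes v: "v \<in> Nn"
  shows "card {S\<in>Seg. lab S = ({v}, l)} = (if \<exists>a. port v a \<and> endv v a = v \<and> hh v a = l then 1 else 0)"
proof (cases "\<exists>a. port v a \<and> endv v a = v \<and> hh v a = l")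
  case True
  then obtain a where a: "port v a" "endv v a = v" "hh v a = l" by blast
  have "{S\<in>Seg. lab S = ({v}, l)} = {sset v a}"
  proof
    show "{sset v a} \<subseteq> {S\<in>Seg. lab S = ({v}, l)}" using a lab_eq[OF a(1)] unfolding Seg_def by auto
  next
    show "{S\<in>Seg. lab S = ({v}, l)} \<subseteq> {sset v a}"
    proof
      fix S assume S: "S \<in> {S\<in>Seg. lab S = ({v}, l)}"
      then obtain u b where q: "port u b" "S = sset u b" unfolding Seg_def by auto
      have L: "{u, endv u b} = {v}" using lab_eq[OF q(1)] S q(2) by auto
      then have u: "u = v" by auto
      then have "b \<in> {a, lst v a}" using loop_nbrs(1)[OF a(1,2)] q(1) unfolding port_def by auto
      then have "b \<in> sset v a" using a_in_sset[OF a(1)] lst_in_sset[OF a(1)] by auto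
      then have "sset u b = sset v a" using same_seg[OF q(1) a(1) a_in_sset[OF q(1)]] by simp
      then show "S \<in> {sset v a}" using q by simp
    qed
  qed
  then show ?thesis using True by simp
next
  case False
  have e: "{S\<in>Seg. lab S = ({v}, l)} = {}"
  proof (rule ccontr)
    assume "{S\<in>Seg. lab S = ({v}, l)} \<noteq> {}"
    then obtain S where S: "S \<in> Seg" "lab S = ({v}, l)" by auto
    then obtain u b where q: "port u b" "S = sset u b" unfolding Seg_def by auto
    have "{u, endv u b} = {v}" "hh u b = l" using lab_eq[OF q(1)] S q(2) by auto
    then show False using False q by auto
  qed
  show ?thesis unfolding e using False by (simp only: card.empty if_False)
qed

lemma Seg_lab_N: "S \<in> Seg \<Longrightarrow> \<exists>v w. v \<in> Nn \<and> w \<in> Nn \<and> fst (lab S) = {v, w}"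
  unfolding Seg_def using lab_eq endv_N unfolding port_def by fastforce

definition segof :: "'a \<Rightarrow> 'a set" where
  "segof x = (let p = (SOME p. port (fst p) (snd p) \<and> x \<in> sset (fst p) (snd p)) in sset (fst p) (snd p))"

lemma segof_eq: assumes p: "port v a" and x: "x \<in> sset v a" shows "segof x = sset v a"
proof -
  let ?p = "SOME p. port (fst p) (snd p) \<and> x \<in> sset (fst p) (snd p)"
  have "port (fst ?p) (snd ?p) \<and> x \<in> sset (fst ?p) (snd ?p)"
    by (rule someI[of _ "(v, a)"]) (simp add: p x)
  then have "sset (fst ?p) (snd ?p) = sset v a" using same_seg[of "fst ?p" "snd ?p" v a x] p x by blast
  then show ?thesis unfolding segof_def Let_def by simp
qed

definition rep :: "'a set \<Rightarrow> 'a \<times> 'a" where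
  "rep S = (SOME p. port (fst p) (snd p) \<and> sset (fst p) (snd p) = S)"

lemma rep_prop: assumes "S \<in> Seg" shows "port (fst (rep S)) (snd (rep S)) \<and> sset (fst (rep S)) (snd (rep S)) = S"
proof -
  obtain v a where "port v a" "S = sset v a" using assms unfolding Seg_def by auto
  then have "\<exists>p. port (fst p) (snd p) \<and> sset (fst p) (snd p) = S" by (intro exI[of _ "(v, a)"]) simp
  then show ?thesis unfolding rep_def by (rule someI_ex)
qed

definition idx :: "'a \<Rightarrow> 'a \<Rightarrow> 'a \<Rightarrow> nat" where
  "idx v a x = (SOME i. 0 < i \<and> i < hh v a \<and> walk v a i = x)"

lemma idx_prop: assumes "x \<in> sset v a" shows "0 < idx v a x \<and> idx v a x < hh v a \<and> walk v a (idx v a x) = x"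
proof -
  obtain i where "0 < i" "i < hh v a" "walk v a i = x" using assms unfolding sset_def by (auto simp: Suc_le_eq)
  then have "\<exists>i. 0 < i \<and> i < hh v a \<and> walk v a i = x" by blast
  then show ?thesis unfolding idx_def by (rule someI_ex)
qed

end


lemma fiber_bij:
  assumes A: "finite A" and B: "finite B"
    and c: "\<And>L. card {a\<in>A. f a = L} = card {b\<in>B. g b = L}"
  shows "\<exists>\<beta>. bij_betw \<beta> A B \<and> (\<forall>a\<in>A. g (\<beta> a) = f a)"
proof -
  define FA where "FA L = {a\<in>A. f a = L}" for L
  define FB where "FB L = {b\<in>B. g b = L}" for L
  have "\<exists>h. bij_betw h (FA L) (FB L)" for L
    using c[of L] A B unfolding FA_def FB_def by (intro finite_same_card_bij) auto
  then have hb: "bij_betw (SOME h. bij_betw h (FA L) (FB L)) (FA L) (FB L)" for L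
    by (rule someI_ex)
  define hL where "hL L = (SOME h. bij_betw h (FA L) (FB L))" for L
  define \<beta> where "\<beta> a = hL (f a) a" for a
  have mem: "\<beta> a \<in> FB (f a)" if "a \<in> A" for a
    using hb[of "f a"] that unfolding \<beta>_def hL_def FA_def bij_betw_def by auto
  have gb: "\<forall>a\<in>A. g (\<beta> a) = f a" using mem unfolding FB_def by auto
  have "bij_betw \<beta> A B" unfolding bij_betw_def
  proof
    show "inj_on \<beta> A"
    proof (rule inj_onI)
      fix a1 a2 assume a: "a1 \<in> A" "a2 \<in> A" "\<beta> a1 = \<beta> a2"
      have f: "f a1 = f a2" using gb a by metis
      have "a1 \<in> FA (f a1)" "a2 \<in> FA (f a1)" using a f unfolding FA_def by auto
      moreover have "hL (f a1) a1 = hL (f a1) a2" using a f unfolding \<beta>_def by simp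
      ultimately show "a1 = a2" using hb[of "f a1"] unfolding hL_def bij_betw_def inj_on_def by blast
    qed
    show "\<beta> ` A = B"
    proof
      show "\<beta> ` A \<subseteq> B" using mem unfolding FB_def by auto
      show "B \<subseteq> \<beta> ` A"
      proof
        fix b assume b: "b \<in> B"
        then have "b \<in> FB (g b)" unfolding FB_def by simp
        then have "b \<in> hL (g b) ` FA (g b)"
          using hb[of "g b"] unfolding hL_def bij_betw_def by simp
        then obtain a where a: "a \<in> FA (g b)" "hL (g b) a = b" by (metis imageE)
        then have "\<beta> a = b" "a \<in> A" unfolding \<beta>_def FA_def by auto
        then show "b \<in> \<beta> ` A" by blast
      qed
    qed
  qed
  then show ?thesis using gb by blast
qed

locale pairL = G: tworeg V X Nn adj + H: tworeg V X Nn adj'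
  for V X Nn :: "'a set" and adj adj' :: "'a \<Rightarrow> 'a \<Rightarrow> bool" +
  assumes cnt: "v \<in> Nn \<Longrightarrow> w \<in> Nn \<Longrightarrow> v \<noteq> w \<Longrightarrow>
      card {x. adj v x \<and> G.endv v x = w \<and> G.hh v x = l} = card {x. adj' v x \<and> H.endv v x = w \<and> H.hh v x = l}"
    and loops: "G.port v a \<Longrightarrow> G.endv v a = v \<Longrightarrow> H.port v b \<Longrightarrow> H.endv v b = v \<Longrightarrow> G.hh v a = H.hh v b"
begin

lemma swap: "pairL V X Nn adj' adj"
  unfolding pairL_def pairL_axioms_def
  using G.tworeg_axioms H.tworeg_axioms by (auto intro: cnt[symmetric] loops[symmetric])

lemma loop_transfer:
  assumes v: "v \<in> Nn" and a: "G.port v a" "G.endv v a = v" "G.hh v a = l"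
  shows "\<exists>b. H.port v b \<and> H.endv v b = v \<and> H.hh v b = l"
proof -
  have vV: "v \<in> V" using v G.VXN by simp
  have "card {w. adj' v w} = 2" using H.deg[OF vV] .
  then obtain b where b: "adj' v b" by (metis card.empty empty_Collect_eq zero_neq_numeral)
  have pb: "H.port v b" using b v unfolding H.port_def by simp
  have e: "H.endv v b = v"
  proof (rule ccontr)
    assume ne: "H.endv v b \<noteq> v"
    let ?w = "H.endv v b"
    have wN: "?w \<in> Nn" using H.endv_N[OF pb] .
    have fin: "finite {x. adj' v x \<and> H.endv v x = ?w \<and> H.hh v x = H.hh v b}"
      by (rule finite_subset[OF _ H.finV]) (auto dest: H.cl2)
    have "b \<in> {x. adj' v x \<and> H.endv v x = ?w \<and> H.hh v x = H.hh v b}" using b by simp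
    then have "card {x. adj' v x \<and> H.endv v x = ?w \<and> H.hh v x = H.hh v b} \<noteq> 0" using fin by auto
    then have "card {x. adj v x \<and> G.endv v x = ?w \<and> G.hh v x = H.hh v b} \<noteq> 0"
      using cnt[OF v wN ne[symmetric]] by simp
    then obtain x where x: "adj v x" "G.endv v x = ?w" by (metis (mono_tags, lifting) Collect_empty_eq card.empty)
    have "x \<in> {a, G.lst v a}" using G.loop_nbrs(1)[OF a(1,2)] x by auto
    moreover have "G.endv v (G.lst v a) = v" using G.endv_rev[OF a(1)] a(2) by simp
    ultimately show False using x a ne by auto
  qed
  show ?thesis using loops[OF a(1,2) pb e] a pb e by auto
qed

lemma lab_counts: "card {S\<in>G.Seg. G.lab S = L} = card {S\<in>H.Seg. H.lab S = L}"
proof -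
  obtain P l where L: "L = (P, l)" by (cases L) auto
  show ?thesis
  proof (cases "\<exists>v w. v \<in> Nn \<and> w \<in> Nn \<and> P = {v, w}")
    case True
    then obtain v w where vw: "v \<in> Nn" "w \<in> Nn" "P = {v, w}" by blast
    show ?thesis
    proof (cases "v = w")
      case False
      then show ?thesis using G.count_nonloop[OF vw(1,2) False] H.count_nonloop[OF vw(1,2) False]
          cnt[OF vw(1,2) False] L vw(3) by simp
    next
      case True
      have "(\<exists>a. G.port v a \<and> G.endv v a = v \<and> G.hh v a = l) \<longleftrightarrow> (\<exists>b. H.port v b \<and> H.endv v b = v \<and> H.hh v b = l)"
        using loop_transfer[OF vw(1)] pairL.loop_transfer[OF swap vw(1)] by blast
      then show ?thesis using G.count_loop[OF vw(1)] H.count_loop[OF vw(1)] L vw(3) True by simp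
    qed
  next
    case False
    have "{S\<in>G.Seg. G.lab S = L} = {}" using G.Seg_lab_N False L by fastforce
    moreover have "{S\<in>H.Seg. H.lab S = L} = {}" using H.Seg_lab_N False L by fastforce
    ultimately show ?thesis by (simp only: card.empty)
  qed
qed

end

locale tworeg2 = pairL +
  assumes cover: "x \<in> X \<Longrightarrow> \<exists>v a. G.port v a \<and> x \<in> G.sset v a"
begin

lemma iso:
  "\<exists>\<phi>. bij_betw \<phi> X X \<and> (\<forall>x\<in>X. \<forall>y\<in>X. adj x y \<longleftrightarrow> adj' (\<phi> x) (\<phi> y)) \<and>
      (\<forall>v\<in>Nn. \<forall>x\<in>X. adj v x \<longleftrightarrow> adj' v (\<phi> x))"
proof -
  obtain \<beta> where \<beta>: "bij_betw \<beta> G.Seg H.Seg" "\<And>S. S \<in> G.Seg \<Longrightarrow> H.lab (\<beta> S) = G.lab S"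
    using fiber_bij[OF G.fin_Seg H.fin_Seg lab_counts] by blast
  have \<pi>ex: "\<exists>b. H.port v b \<and> H.endv v b = G.endv v a \<and> H.hh v b = G.hh v a \<and> H.sset v b = \<beta> (G.sset v a)"
    if p: "G.port v a" for v a
  proof -
    have SG: "G.sset v a \<in> G.Seg" using p unfolding G.Seg_def by blast
    then have "\<beta> (G.sset v a) \<in> H.Seg" using \<beta>(1) unfolding bij_betw_def by blast
    then obtain u b where q: "H.port u b" "\<beta> (G.sset v a) = H.sset u b" unfolding H.Seg_def by blast
    have lb: "({u, H.endv u b}, H.hh u b) = ({v, G.endv v a}, G.hh v a)"
      using \<beta>(2)[OF SG] H.lab_eq[OF q(1)] G.lab_eq[OF p] q(2) by simp
    show ?thesis
    proof (cases "u = v")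
      case True
      then have "H.endv u b = G.endv v a" using lb by (metis doubleton_eq_iff insert_absorb2 prod.inject)
      then show ?thesis using q lb True by auto
    next
      case False
      then have uv: "u = G.endv v a" "H.endv u b = v" using lb by (metis doubleton_eq_iff prod.inject)+
      show ?thesis
        using H.port_rev[OF q(1)] H.endv_rev[OF q(1)] H.hh_rev[OF q(1)] H.sset_rev[OF q(1)] uv lb q(2)
        by (intro exI[of _ "H.lst u b"]) auto
    qed
  qed
  define bb where "bb v a = (SOME b. H.port v b \<and> H.endv v b = G.endv v a \<and> H.hh v b = G.hh v a \<and> H.sset v b = \<beta> (G.sset v a))" for v a
  have bb: "H.port v (bb v a) \<and> H.endv v (bb v a) = G.endv v a \<and> H.hh v (bb v a) = G.hh v a \<and> H.sset v (bb v a) = \<beta> (G.sset v a)"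
    if "G.port v a" for v a
    unfolding bb_def by (rule someI_ex[OF \<pi>ex[OF that]])
  define \<phi> where "\<phi> x = (let p = G.rep (G.segof x) in H.walk (fst p) (bb (fst p) (snd p)) (G.idx (fst p) (snd p) x))" for x
  have info: "\<exists>v a. G.port v a \<and> G.segof x = G.sset v a \<and> (fst (G.rep (G.segof x)), snd (G.rep (G.segof x))) = (v, a) \<and>
      0 < G.idx v a x \<and> G.idx v a x < G.hh v a \<and> G.walk v a (G.idx v a x) = x \<and>
      \<phi> x = H.walk v (bb v a) (G.idx v a x)"
    if x: "x \<in> X" for x
  proof -
    obtain v0 a0 where p0: "G.port v0 a0" "x \<in> G.sset v0 a0" using cover[OF x] by blast
    have Sx: "G.segof x = G.sset v0 a0" using G.segof_eq[OF p0] .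
    then have "G.segof x \<in> G.Seg" using p0 unfolding G.Seg_def by blast
    then have r: "G.port (fst (G.rep (G.segof x))) (snd (G.rep (G.segof x)))" "G.sset (fst (G.rep (G.segof x))) (snd (G.rep (G.segof x))) = G.segof x"
      using G.rep_prop by auto
    define v where "v = fst (G.rep (G.segof x))"
    define a where "a = snd (G.rep (G.segof x))"
    have xin: "x \<in> G.sset v a" using r(2) Sx p0(2) unfolding v_def a_def by simp
    show ?thesis
      using r G.idx_prop[OF xin] unfolding v_def[symmetric] a_def[symmetric]
      by (intro exI[of _ v] exI[of _ a]) (simp add: \<phi>_def v_def a_def Let_def)
  qed
  have phiX: "\<phi> x \<in> X" if xX: "x \<in> X" for x
  proof -
    obtain v a where i: "G.port v a" "0 < G.idx v a x" "G.idx v a x < G.hh v a" "\<phi> x = H.walk v (bb v a) (G.idx v a x)"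
      using info[OF xX] by blast
    show ?thesis using H.hh_props(3)[of v "bb v a" "G.idx v a x"] bb[OF i(1)] i by simp
  qed
  have phi_in: "\<phi> x \<in> \<beta> (G.segof x)" if xX: "x \<in> X" for x
  proof -
    obtain v a where i: "G.port v a" "G.segof x = G.sset v a" "0 < G.idx v a x" "G.idx v a x < G.hh v a" "\<phi> x = H.walk v (bb v a) (G.idx v a x)"
      using info[OF xX] by blast
    have "\<phi> x \<in> H.sset v (bb v a)" using i bb[OF i(1)] unfolding H.sset_def by auto
    then show ?thesis using bb[OF i(1)] i(2) by simp
  qed
  have seg_in: "G.segof x \<in> G.Seg" if xX: "x \<in> X" for x
  proof -
    obtain v a where "G.port v a" "G.segof x = G.sset v a" using info[OF xX] by blast
    then show ?thesis unfolding G.Seg_def by blast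
  qed
  have same_params: "G.segof x = G.segof y \<Longrightarrow> x \<in> X \<Longrightarrow> y \<in> X \<Longrightarrow>
      \<exists>v a. G.port v a \<and> G.segof x = G.sset v a \<and>
        0 < G.idx v a x \<and> G.idx v a x < G.hh v a \<and> G.walk v a (G.idx v a x) = x \<and> \<phi> x = H.walk v (bb v a) (G.idx v a x) \<and>
        0 < G.idx v a y \<and> G.idx v a y < G.hh v a \<and> G.walk v a (G.idx v a y) = y \<and> \<phi> y = H.walk v (bb v a) (G.idx v a y)" for x y
  proof -
    assume e: "G.segof x = G.segof y" and x: "x \<in> X" and y: "y \<in> X"
    obtain v a where ix: "G.port v a" "G.segof x = G.sset v a" "(fst (G.rep (G.segof x)), snd (G.rep (G.segof x))) = (v, a)"
      "0 < G.idx v a x" "G.idx v a x < G.hh v a" "G.walk v a (G.idx v a x) = x" "\<phi> x = H.walk v (bb v a) (G.idx v a x)"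
      using info[OF x] by blast
    obtain v' a' where iy: "G.port v' a'" "G.segof y = G.sset v' a'" "(fst (G.rep (G.segof y)), snd (G.rep (G.segof y))) = (v', a')"
      "0 < G.idx v' a' y" "G.idx v' a' y < G.hh v' a'" "G.walk v' a' (G.idx v' a' y) = y" "\<phi> y = H.walk v' (bb v' a') (G.idx v' a' y)"
      using info[OF y] by blast
    have "v' = v" "a' = a" using ix(3) iy(3) e by auto
    then show ?thesis using ix iy by blast
  qed
  have inj: "inj_on \<phi> X"
  proof (rule inj_onI)
    fix x y assume x: "x \<in> X" and y: "y \<in> X" and e: "\<phi> x = \<phi> y"
    have sx: "\<beta> (G.segof x) \<in> H.Seg" "\<beta> (G.segof y) \<in> H.Seg" using seg_in x y \<beta>(1) unfolding bij_betw_def by blast+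
    obtain u b where ub: "H.port u b" "\<beta> (G.segof x) = H.sset u b" using sx(1) unfolding H.Seg_def by blast
    obtain u' b' where ub': "H.port u' b'" "\<beta> (G.segof y) = H.sset u' b'" using sx(2) unfolding H.Seg_def by blast
    have "\<beta> (G.segof x) = \<beta> (G.segof y)"
      using H.same_seg[OF ub(1) ub'(1), of "\<phi> x"] phi_in[OF x] phi_in[OF y] e ub(2) ub'(2) by simp
    then have "G.segof x = G.segof y" using \<beta>(1) seg_in x y unfolding bij_betw_def inj_on_def by blast
    from same_params[OF this x y] obtain v a where P: "G.port v a" "G.segof x = G.sset v a"
        "0 < G.idx v a x" "G.idx v a x < G.hh v a" "G.walk v a (G.idx v a x) = x" "\<phi> x = H.walk v (bb v a) (G.idx v a x)"
        "0 < G.idx v a y" "G.idx v a y < G.hh v a" "G.walk v a (G.idx v a y) = y" "\<phi> y = H.walk v (bb v a) (G.idx v a y)"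
      by (elim exE conjE) (rule that; assumption)
    have i1: "H.walk v (bb v a) (G.idx v a x) = H.walk v (bb v a) (G.idx v a y)" using P(6) P(10) e by simp
    have hb: "H.port v (bb v a)" "H.hh v (bb v a) = G.hh v a" using bb[OF P(1)] by auto
    have m: "G.idx v a x \<in> {1..<H.hh v (bb v a)}" "G.idx v a y \<in> {1..<H.hh v (bb v a)}"
      using P(3,4,7,8) hb(2) by auto
    have "G.idx v a x = G.idx v a y" using inj_onD[OF H.inj_sset[OF hb(1)] i1 m] .
    then show "x = y" using P by metis
  qed
  have bij: "bij_betw \<phi> X X"
    unfolding bij_betw_def using inj endo_inj_surj[OF G.finX _ inj] phiX by blast
  have adjXX: "adj x y \<longleftrightarrow> adj' (\<phi> x) (\<phi> y)" if x: "x \<in> X" and y: "y \<in> X" for x y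
  proof -
    have key: "adj x y \<longleftrightarrow> adj' (\<phi> x) (\<phi> y)" if e: "G.segof x = G.segof y"
    proof -
      obtain v a where P: "G.port v a" "G.segof x = G.sset v a"
          "0 < G.idx v a x" "G.idx v a x < G.hh v a" "G.walk v a (G.idx v a x) = x" "\<phi> x = H.walk v (bb v a) (G.idx v a x)"
          "0 < G.idx v a y" "G.idx v a y < G.hh v a" "G.walk v a (G.idx v a y) = y" "\<phi> y = H.walk v (bb v a) (G.idx v a y)"
        using same_params[OF e x y] by (elim exE conjE) (rule that; assumption)
      have "adj x y \<longleftrightarrow> (G.idx v a y = Suc (G.idx v a x) \<or> G.idx v a x = Suc (G.idx v a y))"
        using G.adj_in_seg[OF P(1) P(3,4) P(7,8)] P(5,9) by simp
      also have "\<dots> \<longleftrightarrow> adj' (\<phi> x) (\<phi> y)"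
        using H.adj_in_seg[of v "bb v a" "G.idx v a x" "G.idx v a y"] bb[OF P(1)] P by simp
      finally show ?thesis .
    qed
    show ?thesis
    proof
      assume xy: "adj x y"
      obtain v a where "G.port v a" "G.segof x = G.sset v a" using info[OF x] by blast
      moreover have "x \<in> G.segof x" using info[OF x] unfolding G.sset_def by (metis atLeastLessThan_iff image_eqI less_eq_Suc_le One_nat_def)
      ultimately have "y \<in> G.segof x" using G.sset_closed xy y by metis
      then have "G.segof y = G.segof x" using G.segof_eq \<open>G.port v a\<close> \<open>G.segof x = G.sset v a\<close> by metis
      then show "adj' (\<phi> x) (\<phi> y)" using key xy by simp
    next
      assume xy: "adj' (\<phi> x) (\<phi> y)"
      have sx: "\<beta> (G.segof x) \<in> H.Seg" "\<beta> (G.segof y) \<in> H.Seg" using seg_in x y \<beta>(1) unfolding bij_betw_def by blast+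
      obtain u b where ub: "H.port u b" "\<beta> (G.segof x) = H.sset u b" using sx(1) unfolding H.Seg_def by blast
      obtain u' b' where ub': "H.port u' b'" "\<beta> (G.segof y) = H.sset u' b'" using sx(2) unfolding H.Seg_def by blast
      have "\<phi> y \<in> H.sset u b" using H.sset_closed[OF ub(1), of "\<phi> x" "\<phi> y"] phi_in[OF x] ub(2) xy phiX[OF y] by simp
      then have "\<beta> (G.segof x) = \<beta> (G.segof y)"
        using H.same_seg[OF ub(1) ub'(1), of "\<phi> y"] phi_in[OF y] ub(2) ub'(2) by simp
      then have "G.segof x = G.segof y" using \<beta>(1) seg_in x y unfolding bij_betw_def inj_on_def by blast
      then show "adj x y" using key xy by simp
    qed
  qed
  have adjNX: "adj v0 x \<longleftrightarrow> adj' v0 (\<phi> x)" if v0: "v0 \<in> Nn" and x: "x \<in> X" for v0 x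
  proof -
    obtain v a where P: "G.port v a" "0 < G.idx v a x" "G.idx v a x < G.hh v a" "G.walk v a (G.idx v a x) = x"
        "\<phi> x = H.walk v (bb v a) (G.idx v a x)"
      using info[OF x] by blast
    let ?i = "G.idx v a x"
    have "adj v0 x \<longleftrightarrow> adj (G.walk v a ?i) v0" using P(4) G.sym by metis
    also have "\<dots> \<longleftrightarrow> (?i = 1 \<and> v0 = v) \<or> (?i = G.hh v a - 1 \<and> v0 = G.endv v a)"
      using G.Nn_nbr_seg[OF P(1) P(2,3) _ v0] G.Nn_nbr_seg_conv[OF P(1) P(2,3)] by blast
    also have "\<dots> \<longleftrightarrow> adj' (H.walk v (bb v a) ?i) v0"
      using H.Nn_nbr_seg[of v "bb v a" ?i v0] H.Nn_nbr_seg_conv[of v "bb v a" ?i v0] bb[OF P(1)] P v0 by auto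
    also have "\<dots> \<longleftrightarrow> adj' v0 (\<phi> x)" using P(5) H.sym by metis
    finally show ?thesis .
  qed
  show ?thesis using bij adjXX adjNX by blast
qed

end

context tworeg
begin

lemma loop_C_card: assumes p: "port v a" shows "card (insert v (sset v a)) = hh v a"
proof -
  have "v \<notin> sset v a" using sset_X[OF p] p disj unfolding port_def by auto
  moreover have "finite (sset v a)" using sset_X[OF p] finX finite_subset by blast
  ultimately show ?thesis using card_sset[OF p] hh_props(4)[OF p] by simp
qed

lemma loop_closed:
  assumes p: "port v a" and e: "endv v a = v" and u: "u \<in> V"
  shows "{w \<in> insert v (sset v a). adj u w} = (if u \<in> insert v (sset v a) then {w. adj u w} else {})"
proof (cases "u \<in> insert v (sset v a)")
  case True
  have "adj u w \<Longrightarrow> w \<in> insert v (sset v a)" for w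
  proof -
    assume uw: "adj u w"
    show ?thesis
    proof (cases "u = v")
      case True
      then show ?thesis using loop_nbrs(1)[OF p e] uw a_in_sset[OF p] lst_in_sset[OF p] by auto
    next
      case False
      then have us: "u \<in> sset v a" using \<open>u \<in> insert v (sset v a)\<close> by simp
      show ?thesis
      proof (cases "w \<in> X")
        case True then show ?thesis using sset_closed[OF p us uw] by simp
      next
        case False
        then have wN: "w \<in> Nn" using cl2[OF uw] VXN by auto
        obtain i where i: "0 < i" "i < hh v a" "u = walk v a i" using us unfolding sset_def by (auto simp: Suc_le_eq)
        have "(i = 1 \<and> w = v) \<or> (i = hh v a - 1 \<and> w = endv v a)" using Nn_nbr_seg[OF p i(1,2) _ wN] uw i(3) by simp
        then show ?thesis using e by auto
      qed
    qed
  qed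
  then show ?thesis using True by auto
next
  case False
  have "\<not> adj u w" if w: "w \<in> insert v (sset v a)" for w
  proof
    assume uw: "adj u w"
    show False
    proof (cases "w = v")
      case True
      then have "u \<in> {a, lst v a}" using loop_nbrs(1)[OF p e] uw sym by auto
      then show False using False a_in_sset[OF p] lst_in_sset[OF p] by auto
    next
      case wv: False
      then have ws: "w \<in> sset v a" using w by simp
      show False
      proof (cases "u \<in> X")
        case True then show False using sset_closed[OF p ws sym[OF uw]] False by simp
      next
        case uX: False
        then have uN: "u \<in> Nn" using u VXN by auto
        obtain i where i: "0 < i" "i < hh v a" "w = walk v a i" using ws unfolding sset_def by (auto simp: Suc_le_eq)
        have "(i = 1 \<and> u = v) \<or> (i = hh v a - 1 \<and> u = endv v a)" using Nn_nbr_seg[OF p i(1,2) _ uN] sym[OF uw] i(3) by simp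
        then show False using e False by auto
      qed
    qed
  qed
  then show ?thesis using False by auto
qed

lemma loop_conn:
  assumes p: "port v a" and c: "c \<in> insert v (sset v a)"
  shows "(v, c) \<in> {(x, y). adj x y}\<^sup>*"
proof -
  have va: "adj v a" using p unfolding port_def by simp
  have "(v, walk v a i) \<in> {(x, y). adj x y}\<^sup>*" for i
  proof (induction i)
    case 0 then show ?case by simp
  next
    case (Suc i)
    then show ?case using walk_adj[OF va, of i] by (simp add: rtrancl_into_rtrancl)
  qed
  then show ?thesis using c unfolding sset_def by auto
qed

lemma nbr_card: "u \<in> V \<Longrightarrow> card {w\<in>V. adj u w} = 2"
  using deg[of u] cl2 by (metis (no_types, lifting) Collect_cong)

end

lemma sum_ind_card: "finite S \<Longrightarrow> (\<Sum>w\<in>S. if P w then (1::real) else 0) = real (card {w\<in>S. P w})"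
  by (simp add: sum.If_cases Int_def)

lemma tr_tr: "tr (tr M) = M" unfolding tr_def by (intro ext) simp

lemma cj_inv:
  assumes S: "finite S" and o: "orth S M" and B: "\<And>u w. u \<in> S \<Longrightarrow> w \<in> S \<Longrightarrow> B u w = cj S M A u w"
    and u: "u \<in> S" and w: "w \<in> S"
  shows "A u w = cj S (tr M) B u w"
proof -
  have "cj S (tr M) B u w = mm S (mm S M B) (tr M) u w" unfolding cj_def by (simp add: tr_tr)
  also have "\<dots> = mm S (mm S M (cj S M A)) (tr M) u w"
    using B by (intro mm_cong refl) (simp add: mm_def)
  also have "\<dots> = mm S (mm S (mm S M (tr M)) A) (mm S M (tr M)) u w"
    unfolding cj_def using S by (simp add: mm_assoc)
  also have "\<dots> = mm S (mm S idm A) idm u w"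
  proof (rule mm_cong)
    fix z assume z: "z \<in> S"
    show "mm S (mm S M (tr M)) A u z = mm S idm A u z"
      using o u unfolding orth_def by (intro mm_cong refl) simp
    show "mm S M (tr M) z w = idm z w" using o z w unfolding orth_def by simp
  qed
  also have "\<dots> = A u w" using S u w by (simp add: mm_idm_right mm_idm_left)
  finally show ?thesis by simp
qed

lemma orth_tr: "orth S M \<Longrightarrow> orth S (tr M)"
  unfolding orth_def tr_def mm_def by (simp add: mult.commute)

lemma suc_mod: "i < n \<Longrightarrow> Suc i mod n = (if Suc i = n then 0 else Suc i)"
  by auto

lemma cyc_nbrs:
  assumes d: "distinct vs" "length vs = n" "3 \<le> n" "k < n"
  shows "card {w. \<exists>i. {vs ! k, w} = {vs ! i, vs ! (Suc i mod n)} \<and> i < n} = 2"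
proof -
  define p where "p = (if Suc k = n then 0 else Suc k)"
  define q where "q = (if k = 0 then n - 1 else k - 1)"
  have pq: "p < n" "q < n" "p \<noteq> q" using d unfolding p_def q_def by auto
  have eqi: "vs ! i = vs ! j \<longleftrightarrow> i = j" if "i < n" "j < n" for i j
    using nth_eq_iff_index_eq[OF d(1)] that d(2) by simp
  have "{w. \<exists>i. {vs ! k, w} = {vs ! i, vs ! (Suc i mod n)} \<and> i < n} = {vs ! p, vs ! q}"
  proof
    show "{w. \<exists>i. {vs ! k, w} = {vs ! i, vs ! (Suc i mod n)} \<and> i < n} \<subseteq> {vs ! p, vs ! q}"
    proof
      fix w assume "w \<in> {w. \<exists>i. {vs ! k, w} = {vs ! i, vs ! (Suc i mod n)} \<and> i < n}"
      then obtain i where i: "{vs ! k, w} = {vs ! i, vs ! (Suc i mod n)}" "i < n" by blast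
      have smi: "Suc i mod n < n" using d(3) by simp
      from i(1) have "(vs ! k = vs ! i \<and> w = vs ! (Suc i mod n)) \<or> (vs ! k = vs ! (Suc i mod n) \<and> w = vs ! i)"
        by (simp add: doubleton_eq_iff)
      then show "w \<in> {vs ! p, vs ! q}"
      proof
        assume h: "vs ! k = vs ! i \<and> w = vs ! (Suc i mod n)"
        then have "k = i" using eqi d(4) i(2) by simp
        then show ?thesis using h suc_mod[OF i(2)] unfolding p_def by simp
      next
        assume h: "vs ! k = vs ! (Suc i mod n) \<and> w = vs ! i"
        then have "k = Suc i mod n" using eqi d(4) smi by simp
        then have "i = q" using suc_mod[OF i(2)] i(2) unfolding q_def by (auto split: if_splits)
        then show ?thesis using h by simp
      qed
    qed
  next
    show "{vs ! p, vs ! q} \<subseteq> {w. \<exists>i. {vs ! k, w} = {vs ! i, vs ! (Suc i mod n)} \<and> i < n}"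
    proof -
      have "{vs ! k, vs ! p} = {vs ! k, vs ! (Suc k mod n)}" using suc_mod[OF d(4)] unfolding p_def by simp
      moreover have "Suc q mod n = k" using suc_mod[OF pq(2)] d unfolding q_def by auto
      then have "{vs ! k, vs ! q} = {vs ! q, vs ! (Suc q mod n)}" by auto
      ultimately show ?thesis using d(4) pq by blast
    qed
  qed
  moreover have "vs ! p \<noteq> vs ! q" using eqi pq by simp
  ultimately show ?thesis by simp
qed

lemma cycles_deg:
  assumes h: "disjoint_union_of is_cycle_graph \<Gamma>" and u: "u \<in> fst \<Gamma>"
  shows "card {w. {u, w} \<in> snd \<Gamma>} = 2"
proof -
  obtain C where C: "\<forall>c\<in>C. c \<noteq> {}" "\<Union>C = fst \<Gamma>" "\<forall>c\<in>C. \<forall>d\<in>C. c \<noteq> d \<longrightarrow> c \<inter> d = {}"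
    "\<forall>e\<in>snd \<Gamma>. \<exists>c\<in>C. e \<subseteq> c" "\<forall>c\<in>C. is_cycle_graph (induced \<Gamma> c)"
    using h unfolding disjoint_union_of_def by (elim exE conjE) (rule that; assumption)
  obtain c where c: "c \<in> C" "u \<in> c" using C(2) u by blast
  have "is_cycle_graph (induced \<Gamma> c)" using C(5) c(1) by blast
  then obtain vs where vs: "length vs \<ge> 3" "distinct vs" "set vs = fst (induced \<Gamma> c)"
    "snd (induced \<Gamma> c) = {{vs ! i, vs ! (Suc i mod length vs)} | i. i < length vs}"
    unfolding is_cycle_graph_def by (elim exE conjE) (rule that; assumption)
  have "{w. {u, w} \<in> snd \<Gamma>} = {w. {u, w} \<in> snd (induced \<Gamma> c)}"
  proof
    show "{w. {u, w} \<in> snd \<Gamma>} \<subseteq> {w. {u, w} \<in> snd (induced \<Gamma> c)}"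
    proof
      fix w assume "w \<in> {w. {u, w} \<in> snd \<Gamma>}"
      then have e: "{u, w} \<in> snd \<Gamma>" by simp
      then obtain c' where c': "c' \<in> C" "{u, w} \<subseteq> c'" using C(4) by blast
      then have "c' = c" using C(3) c by blast
      then show "w \<in> {w. {u, w} \<in> snd (induced \<Gamma> c)}" using e c' unfolding induced_def by simp
    qed
  next
    show "{w. {u, w} \<in> snd (induced \<Gamma> c)} \<subseteq> {w. {u, w} \<in> snd \<Gamma>}" unfolding induced_def by auto
  qed
  moreover have "u \<in> set vs" using vs(3) u c unfolding induced_def by simp
  then obtain k where k: "k < length vs" "u = vs ! k" by (metis in_set_conv_nth)
  ultimately have "{w. {u, w} \<in> snd \<Gamma>} = {w. {vs ! k, w} \<in> {{vs ! i, vs ! (Suc i mod length vs)} | i. i < length vs}}"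
    using vs(4) by simp
  also have "\<dots> = {w. \<exists>i. {vs ! k, w} = {vs ! i, vs ! (Suc i mod length vs)} \<and> i < length vs}"
    by simp
  finally show ?thesis using cyc_nbrs[OF vs(2) refl vs(1) k(1)] by simp
qed


context tworeg
begin

lemma path_cover:
  assumes vs: "distinct vs" "vs \<noteq> []" "set vs \<subseteq> X"
    and edges: "\<And>y z. y \<in> X \<Longrightarrow> z \<in> X \<Longrightarrow> adj y z \<Longrightarrow> y \<in> set vs \<Longrightarrow> \<exists>i. Suc i < length vs \<and> {y, z} = {vs ! i, vs ! Suc i}"
    and cons: "\<And>i. Suc i < length vs \<Longrightarrow> adj (vs ! i) (vs ! Suc i)"
  shows "i < length vs \<Longrightarrow> \<exists>v a. port v a \<and> vs ! i \<in> sset v a"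
proof (induction i)
  case 0
  let ?y = "vs ! 0"
  have yX: "?y \<in> X" using vs by (simp add: subset_iff)
  have yV: "?y \<in> V" using yX VXN by simp
  have "\<exists>w. adj ?y w \<and> w \<notin> X"
  proof (rule ccontr)
    assume nn: "\<not> (\<exists>w. adj ?y w \<and> w \<notin> X)"
    have "{w. adj ?y w} \<subseteq> {vs ! Suc 0}"
    proof (intro subsetI)
      fix w assume w: "w \<in> {w. adj ?y w}"
      then have wX: "w \<in> X" using nn by blast
      have yin: "?y \<in> set vs" using vs(2) by simp
      obtain i where i: "Suc i < length vs" "{?y, w} = {vs ! i, vs ! Suc i}"
        using edges[OF yX wX _ yin] w by blast
      have "(?y = vs ! i \<and> w = vs ! Suc i) \<or> (?y = vs ! Suc i \<and> w = vs ! i)" using i(2) by (simp add: doubleton_eq_iff)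
      moreover have "?y = vs ! i \<longleftrightarrow> i = 0" "?y \<noteq> vs ! Suc i"
        using nth_eq_iff_index_eq[OF vs(1), of 0 i] nth_eq_iff_index_eq[OF vs(1), of 0 "Suc i"] i(1) vs(2) by auto
      ultimately show "w \<in> {vs ! Suc 0}" by auto
    qed
    then have "card {w. adj ?y w} \<le> card {vs ! Suc 0}" by (intro card_mono) auto
    then show False using deg[OF yV] by simp
  qed
  then obtain w where w: "adj ?y w" "w \<notin> X" by blast
  have wN: "w \<in> Nn" using cl2[OF w(1)] w(2) VXN by auto
  have "port w ?y" using wN sym[OF w(1)] unfolding port_def by simp
  then show ?case using a_in_sset by blast
next
  case (Suc i)
  then obtain v a where p: "port v a" "vs ! i \<in> sset v a" by auto
  have "vs ! Suc i \<in> X" using vs Suc.prems by (simp add: subset_iff)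
  then have "vs ! Suc i \<in> sset v a" using sset_closed[OF p(1) p(2) cons[OF Suc.prems]] by simp
  then show ?case using p by blast
qed

end

lemma edge_facts:
  assumes "is_graph \<Gamma>" "{u, w} \<in> snd \<Gamma>"
  shows "u \<noteq> w \<and> u \<in> fst \<Gamma> \<and> w \<in> fst \<Gamma>"
proof -
  obtain a b where ab: "{u, w} = {a, b}" "a \<noteq> b" "a \<in> fst \<Gamma>" "b \<in> fst \<Gamma>"
    using assms unfolding is_graph_def by blast
  then show ?thesis by (auto simp: doubleton_eq_iff)
qed

lemma mpow_nonneg: "(\<And>x y. 0 \<le> T x y) \<Longrightarrow> 0 \<le> mpow S T j x y"
proof (induction j arbitrary: x y)
  case 0 then show ?case by (simp add: idm_def)
next
  case (Suc j) then show ?case by (simp add: mm_def sum_nonneg)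
qed

lemma mpow_restrict:
  assumes S: "finite S" and XS: "X \<subseteq> S" and T: "\<And>x z. z \<notin> X \<Longrightarrow> T x z = 0"
  shows "mpow S T j x y = mpow X T j x y"
proof (induction j arbitrary: x)
  case 0 then show ?case by simp
next
  case (Suc j)
  have "mpow S T (Suc j) x y = (\<Sum>z\<in>S. T x z * mpow S T j z y)" by (simp add: mm_def)
  also have "\<dots> = (\<Sum>z\<in>X. T x z * mpow S T j z y)"
    using S XS T by (intro sum.mono_neutral_right) auto
  also have "\<dots> = (\<Sum>z\<in>X. T x z * mpow X T j z y)" using Suc.IH by simp
  finally show ?case by (simp add: mm_def)
qed

context tworeg
begin

lemma TX_mpow: "mpow V TX j x y = mpow X TX j x y"
  by (rule mpow_restrict[OF finV]) (auto simp: VXN TX_def)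

lemma Fv_mm:
  assumes v: "v \<in> Nn" and w: "w \<in> Nn"
  shows "Fv j v w = mm V (mm V (\<lambda>a b. if adj a b then 1 else 0) (mpow V TX j)) (\<lambda>a b. if adj a b then 1 else 0) v w"
proof -
  let ?A = "\<lambda>a b. if adj a b then (1::real) else 0"
  have nX: "?A v x = 0" "?A x w = 0" if "x \<notin> X" for x
    using that v w ind cl2 sym VXN by (auto, blast+)
  have XV: "X \<subseteq> V" using VXN by simp
  have "mm V (mm V ?A (mpow V TX j)) ?A v w = (\<Sum>y\<in>V. (\<Sum>x\<in>V. ?A v x * mpow V TX j x y) * ?A y w)"
    unfolding mm_def by simp
  also have "\<dots> = (\<Sum>y\<in>X. (\<Sum>x\<in>V. ?A v x * mpow V TX j x y) * ?A y w)"
    using finV XV nX by (intro sum.mono_neutral_right) auto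
  also have "\<dots> = (\<Sum>y\<in>X. (\<Sum>x\<in>X. ?A v x * mpow X TX j x y) * ?A y w)"
  proof (rule sum.cong[OF refl])
    fix y assume "y \<in> X"
    have "(\<Sum>x\<in>V. ?A v x * mpow V TX j x y) = (\<Sum>x\<in>X. ?A v x * mpow V TX j x y)"
      using finV XV nX by (intro sum.mono_neutral_right) auto
    then show "(\<Sum>x\<in>V. ?A v x * mpow V TX j x y) * ?A y w = (\<Sum>x\<in>X. ?A v x * mpow X TX j x y) * ?A y w"
      using TX_mpow by simp
  qed
  also have "\<dots> = (\<Sum>y\<in>X. \<Sum>x\<in>X. BB v x * mpow X TX j x y * BB w y)"
  proof (rule sum.cong[OF refl])
    fix y
    have symA: "?A y w = BB w y" using sym unfolding BB_def by auto
    show "(\<Sum>x\<in>X. ?A v x * mpow X TX j x y) * ?A y w = (\<Sum>x\<in>X. BB v x * mpow X TX j x y * BB w y)"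
      unfolding symA by (simp add: sum_distrib_right BB_def)
  qed
  also have "\<dots> = Fv j v w" unfolding Fv_def by (rule sum.swap)
  finally show ?thesis by simp
qed

lemma Fv_nonneg: "0 \<le> Fv j v w"
  unfolding Fv_def BB_def by (intro sum_nonneg mult_nonneg_nonneg mpow_nonneg) (auto simp: TX_def)

end

theorem lemma3p9:
  fixes G H :: "'a graph" and X :: "'a set" and Q :: "'a \<Rightarrow> 'a \<Rightarrow> real"
  assumes "Q_switching G H X Q"
    and "disjoint_union_of is_cycle_graph (nbhd_graph G X)"
    and "disjoint_union_of is_path_graph (induced (nbhd_graph G X) X)"
  shows "\<forall>Y. Y \<subseteq> nbhd G X \<longrightarrow>
           isomorphic (induced (nbhd_graph G X) (X \<union> Y)) (induced (nbhd_graph H X) (X \<union> Y))"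
proof (intro allI impI)
  fix Y assume Y: "Y \<subseteq> nbhd G X"
  have gG: "is_graph G" and gH: "is_graph H" and VH: "fst H = fst G" and XV: "X \<subseteq> fst G"
    and oQ: "orthogonal_on X Q"
    using assms(1) unfolding Q_switching_def by auto
  obtain s where s: "\<forall>v\<in>fst G - X. s v = -1 \<or> s v = 1"
    and rel: "\<forall>u\<in>fst G. \<forall>w\<in>fst G. adjm H u w = (\<Sum>x\<in>fst G. \<Sum>y\<in>fst G.
              switch_matrix X Q s x u * adjm G x y * switch_matrix X Q s y w)"
    using assms(1) unfolding Q_switching_def by blast
  define V where "V = fst G"
  define Nn where "Nn = nbhd G X - X"
  define V' where "V' = X \<union> Nn"
  define M where "M = switch_matrix X Q s"
  define adjG where "adjG u w \<longleftrightarrow> {u, w} \<in> snd (nbhd_graph G X)" for u w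
  define adjH where "adjH u w \<longleftrightarrow> {u, w} \<in> snd (nbhd_graph H X)" for u w
  define aG where "aG u w = (if adjG u w then 1 else (0::real))" for u w
  define aH where "aH u w = (if adjH u w then 1 else (0::real))" for u w
  have finV: "finite V" using gG unfolding is_graph_def V_def by simp
  have nbV: "nbhd G X \<subseteq> V" unfolding nbhd_def V_def by auto
  have XV': "X \<subseteq> V" using XV unfolding V_def .
  have V'V: "V' \<subseteq> V" using nbV XV' unfolding V'_def Nn_def by auto
  have finV': "finite V'" using finite_subset[OF V'V finV] .
  have finX: "finite X" using finite_subset[OF XV' finV] .
  have finN: "finite Nn" using finite_subset[of Nn V] V'V finV unfolding V'_def by auto
  have V'eq: "V' = X \<union> nbhd G X" unfolding V'_def Nn_def by auto
  have dsj: "X \<inter> Nn = {}" unfolding Nn_def by auto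
  have adjG_iff: "adjG u w \<longleftrightarrow> {u, w} \<in> snd G \<and> (u \<in> X \<or> w \<in> X)" for u w
    unfolding adjG_def nbhd_graph_def by auto
  have adjH_iff: "adjH u w \<longleftrightarrow> {u, w} \<in> snd H \<and> (u \<in> X \<or> w \<in> X)" for u w
    unfolding adjH_def nbhd_graph_def by auto
  have Gsym: "adjG u w \<Longrightarrow> adjG w u" for u w unfolding adjG_iff by (auto simp: insert_commute)
  have Hsym: "adjH u w \<Longrightarrow> adjH w u" for u w unfolding adjH_iff by (auto simp: insert_commute)
  have Girr: "\<not> adjG u u" for u using edge_facts[OF gG, of u u] unfolding adjG_iff by auto
  have Hirr: "\<not> adjH u u" for u using edge_facts[OF gH, of u u] unfolding adjH_iff by auto
  have Gind: "u \<in> Nn \<Longrightarrow> w \<in> Nn \<Longrightarrow> \<not> adjG u w" for u w unfolding adjG_iff Nn_def by auto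
  have Hind: "u \<in> Nn \<Longrightarrow> w \<in> Nn \<Longrightarrow> \<not> adjH u w" for u w unfolding adjH_iff Nn_def by auto
  have GV'1: "u \<in> V'" if "adjG u w" for u w
  proof -
    have e: "{u, w} \<in> snd G" "u \<in> X \<or> w \<in> X" using that unfolding adjG_iff by auto
    have "u \<in> fst G" using edge_facts[OF gG e(1)] by simp
    show ?thesis
    proof (cases "u \<in> X")
      case True then show ?thesis unfolding V'_def by simp
    next
      case False
      then have "w \<in> X" using e by simp
      then have "u \<in> nbhd G X" using e(1) \<open>u \<in> fst G\<close> unfolding nbhd_def by (auto simp: insert_commute)
      then show ?thesis unfolding V'eq by simp
    qed
  qed
  have GV': "u \<in> V' \<and> w \<in> V'" if "adjG u w" for u w using GV'1[OF that] GV'1[OF Gsym[OF that]] by simp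
  have MX: "M a u = 0" "M u a = 0" if "u \<in> X" "a \<notin> X" for a u
    using that unfolding M_def switch_matrix_def by auto
  have MN: "M a u = (if a = u then s u else 0)" "M u a = (if a = u then s u else 0)" if "u \<notin> X" for a u
    using that unfolding M_def switch_matrix_def by auto
  have MQ: "M a u = Q a u" if "a \<in> X" "u \<in> X" for a u
    using that unfolding M_def switch_matrix_def by auto
  have ssq: "s u * s u = 1" if "u \<in> Nn" for u
  proof -
    have "u \<in> fst G - X" using that nbV unfolding Nn_def V_def by auto
    then have "s u = -1 \<or> s u = 1" using s by blast
    then show ?thesis by auto
  qed
  have split: "(\<Sum>a\<in>V'. f a) = (\<Sum>a\<in>X. f a) + (\<Sum>a\<in>Nn. f a)" for f :: "'a \<Rightarrow> real"
    unfolding V'_def using finX finN dsj by (rule sum.union_disjoint)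
  have sumNl: "(\<Sum>a\<in>V'. M a u * f a) = s u * f u" if "u \<in> V'" "u \<notin> X" for u f
  proof -
    have "(\<Sum>a\<in>V'. M a u * f a) = (\<Sum>a\<in>V'. if a = u then s u * f u else 0)"
      using MN[OF that(2)] by (intro sum.cong refl) auto
    then show ?thesis using finV' that(1) by simp
  qed
  have sumNr: "(\<Sum>a\<in>V'. M u a * f a) = s u * f u" if "u \<in> V'" "u \<notin> X" for u f
  proof -
    have "(\<Sum>a\<in>V'. M u a * f a) = (\<Sum>a\<in>V'. if a = u then s u * f u else 0)"
      using MN[OF that(2)] by (intro sum.cong refl) auto
    then show ?thesis using finV' that(1) by simp
  qed
  have sumXl: "(\<Sum>a\<in>V'. M a u * f a) = (\<Sum>a\<in>X. Q a u * f a)" if "u \<in> X" for u f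
  proof -
    have "(\<Sum>a\<in>Nn. M a u * f a) = 0" using MX(1)[OF that] dsj by (intro sum.neutral) auto
    then show ?thesis using split[of "\<lambda>a. M a u * f a"] MQ that by simp
  qed
  have sumXr: "(\<Sum>a\<in>V'. M u a * f a) = (\<Sum>a\<in>X. Q u a * f a)" if "u \<in> X" for u f
  proof -
    have "(\<Sum>a\<in>Nn. M u a * f a) = 0" using MX(2)[OF that] dsj by (intro sum.neutral) auto
    then show ?thesis using split[of "\<lambda>a. M u a * f a"] MQ that by simp
  qed
  have oQ1: "(\<Sum>z\<in>X. Q z x * Q z y) = idm x y" "(\<Sum>z\<in>X. Q x z * Q y z) = idm x y" if "x \<in> X" "y \<in> X" for x y
    using oQ that unfolding orthogonal_on_def idm_def by auto
  have orthM: "orth V' M"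
    unfolding orth_def
  proof (intro conjI ballI)
    fix x y assume x: "x \<in> V'" and y: "y \<in> V'"
    show "mm V' M (tr M) x y = idm x y"
    proof -
      have e: "mm V' M (tr M) x y = (\<Sum>z\<in>V'. M x z * M y z)" unfolding mm_def tr_def by simp
      show ?thesis
      proof (cases "x \<in> X")
        case xX: True
        show ?thesis
        proof (cases "y \<in> X")
          case True
          then show ?thesis unfolding e sumXr[OF xX] using MQ oQ1 xX by simp
        next
          case False
          have "(\<Sum>z\<in>V'. M x z * M y z) = (\<Sum>z\<in>V'. M y z * M x z)" by (simp add: mult.commute)
          also have "\<dots> = s y * M x y" using sumNr[OF y False] .
          finally show ?thesis unfolding e using MX(2)[OF xX False] xX False by (auto simp: idm_def)
        qed
      next
        case False
        then show ?thesis unfolding e sumNr[OF x False] using MN(1)[OF False, of y] ssq x False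
          unfolding V'_def by (auto simp: idm_def)
      qed
    qed
    show "mm V' (tr M) M x y = idm x y"
    proof -
      have e: "mm V' (tr M) M x y = (\<Sum>z\<in>V'. M z x * M z y)" unfolding mm_def tr_def by simp
      show ?thesis
      proof (cases "x \<in> X")
        case xX: True
        show ?thesis
        proof (cases "y \<in> X")
          case True
          then show ?thesis unfolding e sumXl[OF xX] using MQ oQ1 xX by simp
        next
          case False
          have "(\<Sum>z\<in>V'. M z x * M z y) = (\<Sum>z\<in>V'. M z y * M z x)" by (simp add: mult.commute)
          also have "\<dots> = s y * M y x" using sumNl[OF y False] .
          finally show ?thesis unfolding e using MX(1)[OF xX False] xX False by (auto simp: idm_def)
        qed
      next
        case False
        then show ?thesis unfolding e sumNl[OF x False] using MN(2)[OF False, of y] ssq x False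
          unfolding V'_def by (auto simp: idm_def)
      qed
    qed
  qed
  have cjN: "cj V' M Z u w = s u * s w * Z u w" if "u \<in> V'" "u \<notin> X" "w \<in> V'" "w \<notin> X" for Z u w
  proof -
    have "cj V' M Z u w = (\<Sum>y\<in>V'. (\<Sum>x\<in>V'. M x u * Z x y) * M y w)" unfolding cj_def mm_def tr_def by simp
    also have "\<dots> = (\<Sum>y\<in>V'. M y w * (s u * Z u y))"
    proof (rule sum.cong[OF refl])
      fix y
      show "(\<Sum>x\<in>V'. M x u * Z x y) * M y w = M y w * (s u * Z u y)"
        using sumNl[OF that(1,2), of "\<lambda>x. Z x y"] by simp
    qed
    also have "\<dots> = s w * (s u * Z u w)" using sumNl[OF that(3,4)] .
    finally show ?thesis by simp
  qed
  have sumVr: "(\<Sum>y\<in>V. f y * M y w) = f w * s w" if "w \<in> V" "w \<notin> X" for f w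
  proof -
    have "(\<Sum>y\<in>V. f y * M y w) = (\<Sum>y\<in>V. if y = w then f w * s w else 0)"
      using MN(1)[OF that(2)] by (intro sum.cong refl) auto
    then show ?thesis using finV that(1) by simp
  qed
  have adjmG: "adjm G u w = (if {u, w} \<in> snd G then 1 else 0)" for u w unfolding adjm_def by simp
  have relV: "adjm H u w = (\<Sum>x\<in>V. \<Sum>y\<in>V. M x u * adjm G x y * M y w)" if "u \<in> V" "w \<in> V" for u w
    using rel that unfolding V_def M_def by simp
  have Hnb: "w \<in> nbhd G X" if x: "x \<in> X" and w: "w \<in> V" "w \<notin> X" and e: "{x, w} \<in> snd H" for x w
  proof (rule ccontr)
    assume nw: "w \<notin> nbhd G X"
    have z: "adjm G a w = 0" if "a \<in> X" for a
      using nw w that unfolding nbhd_def adjm_def V_def by auto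
    have "adjm H x w = (\<Sum>a\<in>V. \<Sum>y\<in>V. M a x * adjm G a y * M y w)" using relV x XV' w by blast
    also have "\<dots> = (\<Sum>a\<in>V. M a x * adjm G a w * s w)" using sumVr[OF w] by simp
    also have "\<dots> = 0"
    proof (intro sum.neutral ballI)
      fix a assume "a \<in> V"
      show "M a x * adjm G a w * s w = 0"
        using z MX(1)[OF x, of a] by (cases "a \<in> X") auto
    qed
    finally show False using e unfolding adjm_def by simp
  qed
  have HV'1: "u \<in> V'" if "adjH u w" for u w
  proof -
    have e: "{u, w} \<in> snd H" "u \<in> X \<or> w \<in> X" using that unfolding adjH_iff by auto
    have uV: "u \<in> V" using edge_facts[OF gH e(1)] VH unfolding V_def by simp
    show ?thesis
    proof (cases "u \<in> X")
      case True then show ?thesis unfolding V'_def by simp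
    next
      case False
      then have "w \<in> X" using e by simp
      then have "u \<in> nbhd G X" using Hnb[OF _ uV False, of w] e(1) by (simp add: insert_commute)
      then show ?thesis unfolding V'eq by simp
    qed
  qed
  have HV': "u \<in> V' \<and> w \<in> V'" if "adjH u w" for u w using HV'1[OF that] HV'1[OF Hsym[OF that]] by simp
  have F5: "aH u w = cj V' M aG u w" if u: "u \<in> V'" and w: "w \<in> V'" for u w
  proof (cases "u \<in> X \<or> w \<in> X")
    case True
    have uV: "u \<in> V" and wV: "w \<in> V" using u w V'V by auto
    have "aH u w = adjm H u w" unfolding aH_def adjm_def adjH_iff using True by simp
    also have "\<dots> = (\<Sum>x\<in>V. \<Sum>y\<in>V. M x u * adjm G x y * M y w)" using relV[OF uV wV] .
    also have "\<dots> = (\<Sum>x\<in>V. \<Sum>y\<in>V. M x u * aG x y * M y w)"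
    proof (intro sum.cong refl)
      fix x y
      show "M x u * adjm G x y * M y w = M x u * aG x y * M y w"
      proof (cases "u \<in> X")
        case uX: True
        show ?thesis
        proof (cases "x \<in> X")
          case True then show ?thesis unfolding aG_def adjm_def adjG_iff by simp
        next
          case False then show ?thesis using MX(1)[OF uX False] by simp
        qed
      next
        case uX: False
        then have wX: "w \<in> X" using True by simp
        show ?thesis
        proof (cases "y \<in> X")
          case True then show ?thesis unfolding aG_def adjm_def adjG_iff by simp
        next
          case False then show ?thesis using MX(1)[OF wX False] by simp
        qed
      qed
    qed
    also have "\<dots> = (\<Sum>x\<in>V'. \<Sum>y\<in>V. M x u * aG x y * M y w)"
    proof (rule sum.mono_neutral_right[OF finV V'V])
      show "\<forall>x\<in>V - V'. (\<Sum>y\<in>V. M x u * aG x y * M y w) = 0"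
        using GV' unfolding aG_def by (auto intro!: sum.neutral)
    qed
    also have "\<dots> = (\<Sum>x\<in>V'. \<Sum>y\<in>V'. M x u * aG x y * M y w)"
    proof (rule sum.cong[OF refl])
      fix x assume "x \<in> V'"
      show "(\<Sum>y\<in>V. M x u * aG x y * M y w) = (\<Sum>y\<in>V'. M x u * aG x y * M y w)"
        using GV' unfolding aG_def by (intro sum.mono_neutral_right[OF finV V'V]) auto
    qed
    also have "\<dots> = (\<Sum>y\<in>V'. \<Sum>x\<in>V'. M x u * aG x y * M y w)" by (rule sum.swap)
    also have "\<dots> = cj V' M aG u w" unfolding cj_def mm_def tr_def by (simp add: sum_distrib_right)
    finally show ?thesis .
  next
    case False
    then have "aH u w = 0" unfolding aH_def adjH_iff by simp
    moreover have "cj V' M aG u w = s u * s w * aG u w" using cjN u w False by simp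
    moreover have "aG u w = 0" unfolding aG_def adjG_iff using False by simp
    ultimately show ?thesis by simp
  qed
  have degG: "card {w. adjG u w} = 2" if "u \<in> V'" for u
  proof -
    have "u \<in> fst (nbhd_graph G X)" using that unfolding V'eq nbhd_graph_def by simp
    from cycles_deg[OF assms(2) this] show ?thesis unfolding adjG_def by simp
  qed
  have cardS: "(\<Sum>w\<in>V'. if P w then (1::real) else 0) = real (card {w. P w})" if "\<And>w. P w \<Longrightarrow> w \<in> V'" for P
  proof -
    have "{w\<in>V'. P w} = {w. P w}" using that by auto
    then show ?thesis using sum_ind_card[OF finV', of P] by simp
  qed
  have sumG2: "(\<Sum>w\<in>V'. aG u w) = 2" if "u \<in> V'" for u
    unfolding aG_def using cardS[of "adjG u"] degG[OF that] GV' by simp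
  have sumH2: "(\<Sum>w\<in>V'. aH u w) = 2" if "u \<in> V'" for u
  proof (rule deg2_transfer[OF finV' orthM F5])
    show "aG u w = 0 \<or> aG u w = 1" for u w unfolding aG_def by simp
    show "aG u w = aG w u" for u w unfolding aG_def using Gsym by auto
    show "(\<Sum>w\<in>V'. aG u w) = 2" if "u \<in> V'" for u using sumG2[OF that] .
    show "aH u w = 0 \<or> aH u w = 1" for u w unfolding aH_def by simp
  qed (use that in auto)
  have degH: "card {w. adjH u w} = 2" if "u \<in> V'" for u
    using sumH2[OF that] cardS[of "adjH u"] HV' unfolding aH_def by simp
  have tG: "tworeg V' X Nn adjG"
    by unfold_locales (use finV' dsj Gsym Girr GV' degG Gind in \<open>auto simp: V'_def\<close>)
  have tH: "tworeg V' X Nn adjH"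
    by unfold_locales (use finV' dsj Hsym Hirr HV' degH Hind in \<open>auto simp: V'_def\<close>)
  interpret G: tworeg V' X Nn adjG by (rule tG)
  interpret H: tworeg V' X Nn adjH by (rule tH)
  have YN: "Y - X \<subseteq> Nn" using Y unfolding Nn_def by auto
  have THcj: "H.TX u w = cj V' M G.TX u w" if u: "u \<in> V'" and w: "w \<in> V'" for u w
  proof (cases "u \<in> X")
    case uX: True
    show ?thesis
    proof (cases "w \<in> X")
      case wX: True
      have "H.TX u w = aH u w" unfolding H.TX_def aH_def using uX wX by simp
      also have "\<dots> = cj V' M aG u w" using F5[OF u w] .
      also have "\<dots> = (\<Sum>y\<in>V'. (\<Sum>x\<in>V'. M x u * aG x y) * M y w)" unfolding cj_def mm_def tr_def by simp
      also have "\<dots> = (\<Sum>y\<in>V'. (\<Sum>x\<in>V'. M x u * G.TX x y) * M y w)"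
      proof (rule sum.cong[OF refl])
        fix y
        show "(\<Sum>x\<in>V'. M x u * aG x y) * M y w = (\<Sum>x\<in>V'. M x u * G.TX x y) * M y w"
        proof (cases "y \<in> X")
          case False then show ?thesis using MX(1)[OF wX False] by simp
        next
          case yX: True
          have "(\<Sum>x\<in>V'. M x u * aG x y) = (\<Sum>x\<in>V'. M x u * G.TX x y)"
          proof (rule sum.cong[OF refl])
            fix x
            show "M x u * aG x y = M x u * G.TX x y"
              using MX(1)[OF uX, of x] yX unfolding aG_def G.TX_def by (cases "x \<in> X") auto
          qed
          then show ?thesis by simp
        qed
      qed
      also have "\<dots> = cj V' M G.TX u w" unfolding cj_def mm_def tr_def by simp
      finally show ?thesis .
    next
      case wX: False
      have "H.TX u w = 0" unfolding H.TX_def using wX by simp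
      moreover have "cj V' M G.TX u w = 0"
      proof -
        have "cj V' M G.TX u w = (\<Sum>y\<in>V'. M y w * (\<Sum>x\<in>V'. M x u * G.TX x y))"
          unfolding cj_def mm_def tr_def by (simp add: mult.commute)
        also have "\<dots> = s w * (\<Sum>x\<in>V'. M x u * G.TX x w)" using sumNl[OF w wX] .
        also have "\<dots> = 0" using wX unfolding G.TX_def by simp
        finally show ?thesis .
      qed
      ultimately show ?thesis by simp
    qed
  next
    case uX: False
    have "H.TX u w = 0" unfolding H.TX_def using uX by simp
    moreover have "cj V' M G.TX u w = 0"
    proof -
      have "cj V' M G.TX u w = (\<Sum>y\<in>V'. (\<Sum>x\<in>V'. M x u * G.TX x y) * M y w)"
        unfolding cj_def mm_def tr_def by simp
      also have "\<dots> = (\<Sum>y\<in>V'. (s u * G.TX u y) * M y w)"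
        using sumNl[OF u uX] by simp
      also have "\<dots> = 0" using uX unfolding G.TX_def by simp
      finally show ?thesis .
    qed
    ultimately show ?thesis by simp
  qed
  have mpH: "mpow V' H.TX j x y = cj V' M (mpow V' G.TX j) x y" if "x \<in> V'" "y \<in> V'" for j x y
    using cj_mpow[OF finV' orthM THcj] that by blast
  have aGf: "(\<lambda>a b. if adjG a b then 1 else 0) = aG" by (intro ext) (simp add: aG_def)
  have aHf: "(\<lambda>a b. if adjH a b then 1 else 0) = aH" by (intro ext) (simp add: aH_def)
  have Finv: "H.Fv j v w = G.Fv j v w" if v: "v \<in> Nn" and w: "w \<in> Nn" for j v w
  proof -
    have vV: "v \<in> V'" "v \<notin> X" and wV: "w \<in> V'" "w \<notin> X" using v w dsj unfolding V'_def by auto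
    let ?P = "mpow V' G.TX j"
    have "H.Fv j v w = mm V' (mm V' aH (mpow V' H.TX j)) aH v w"
      using H.Fv_mm[OF v w] unfolding aHf .
    also have "\<dots> = mm V' (mm V' (cj V' M aG) (cj V' M ?P)) (cj V' M aG) v w"
    proof (rule mm_cong)
      fix z assume z: "z \<in> V'"
      show "mm V' aH (mpow V' H.TX j) v z = mm V' (cj V' M aG) (cj V' M ?P) v z"
        using F5 mpH vV z by (intro mm_cong) auto
      show "aH z w = cj V' M aG z w" using F5 z wV by simp
    qed
    also have "\<dots> = mm V' (cj V' M (mm V' aG ?P)) (cj V' M aG) v w"
      using cj_mm[OF finV' orthM vV(1)] by (intro mm_cong) auto
    also have "\<dots> = cj V' M (mm V' (mm V' aG ?P) aG) v w"
      using cj_mm[OF finV' orthM vV(1) wV(1)] by simp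
    also have "\<dots> = s v * s w * mm V' (mm V' aG ?P) aG v w" using cjN vV wV by simp
    also have "mm V' (mm V' aG ?P) aG v w = G.Fv j v w" using G.Fv_mm[OF v w] unfolding aGf by simp
    finally have e: "H.Fv j v w = s v * s w * G.Fv j v w" .
    have "s v * s w = 1 \<or> s v * s w = -1"
    proof -
      have "s v = -1 \<or> s v = 1" "s w = -1 \<or> s w = 1" using s v w nbV unfolding Nn_def V_def by auto
      then show ?thesis by auto
    qed
    then show ?thesis using e G.Fv_nonneg[of j v w] H.Fv_nonneg[of j v w] by auto
  qed
  have cnt: "card {x. adjG v x \<and> G.endv v x = w \<and> G.hh v x = l} = card {x. adjH v x \<and> H.endv v x = w \<and> H.hh v x = l}"
    if v: "v \<in> Nn" and w: "w \<in> Nn" and vw: "v \<noteq> w" for v w l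
  proof -
    let ?PG = "{x. adjG v x \<and> G.endv v x = w}" and ?PH = "{x. adjH v x \<and> H.endv v x = w}"
    have fG: "finite ?PG" using finite_subset[OF _ finV', of ?PG] GV' by blast
    have fH: "finite ?PH" using finite_subset[OF _ finV', of ?PH] HV' by blast
    have pG: "2 \<le> G.hh v x" if "x \<in> ?PG" for x using G.hh_props(4)[of v x] that v unfolding G.port_def by simp
    have pH: "2 \<le> H.hh v x" if "x \<in> ?PH" for x using H.hh_props(4)[of v x] that v unfolding H.port_def by simp
    have eq: "(\<Sum>x\<in>?PG. Wc (G.hh v x - 1) j) = (\<Sum>x\<in>?PH. Wc (H.hh v x - 1) j)" for j
      using G.Fv_decomp[OF v w vw, of j] H.Fv_decomp[OF v w vw, of j] Finv[OF v w, of j] by simp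
    have tr: "card {x\<in>?PG. G.hh v x - 1 = l'} = card {x\<in>?PH. H.hh v x - 1 = l'}" for l'
    proof (rule tri[OF fG fH _ _ eq])
      show "0 < G.hh v x - 1" if "x \<in> ?PG" for x using pG[OF that] by simp
      show "0 < H.hh v x - 1" if "x \<in> ?PH" for x using pH[OF that] by simp
    qed
    show ?thesis
    proof (cases l)
      case 0
      have "{x. adjG v x \<and> G.endv v x = w \<and> G.hh v x = l} = {}" "{x. adjH v x \<and> H.endv v x = w \<and> H.hh v x = l} = {}"
        using pG pH 0 by fastforce+
      then show ?thesis by (simp only: card.empty)
    next
      case (Suc l')
      have "{x. adjG v x \<and> G.endv v x = w \<and> G.hh v x = l} = {x\<in>?PG. G.hh v x - 1 = l'}"
        "{x. adjH v x \<and> H.endv v x = w \<and> H.hh v x = l} = {x\<in>?PH. H.hh v x - 1 = l'}"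
        using pG pH Suc by fastforce+
      then show ?thesis using tr[of l'] by simp
    qed
  qed
  have Mv: "M a v = (if a = v then s v else 0)" "tr M a v = (if a = v then s v else 0)" if "v \<in> Nn" for a v
  proof -
    have vX: "v \<notin> X" using that dsj by auto
    show "M a v = (if a = v then s v else 0)" using MN(1)[OF vX] .
    show "tr M a v = (if a = v then s v else 0)" unfolding tr_def using MN(2)[OF vX] .
  qed
  have loops: "G.hh v a = H.hh v b"
    if pa: "G.port v a" and ea: "G.endv v a = v" and pb: "H.port v b" and eb: "H.endv v b = v" for v a b
  proof -
    have vN: "v \<in> Nn" using pa unfolding G.port_def by simp
    have vV: "v \<in> V'" using vN unfolding V'_def by simp
    let ?CG = "insert v (G.sset v a)" and ?CH = "insert v (H.sset v b)"
    have CG: "?CG \<subseteq> V'" using G.sset_X[OF pa] vV unfolding V'_def by auto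
    have CH: "?CH \<subseteq> V'" using H.sset_X[OF pb] vV unfolding V'_def by auto
    have fCG: "finite ?CG" using finite_subset[OF CG finV'] .
    have fCH: "finite ?CH" using finite_subset[OF CH finV'] .
    have eigG: "(\<Sum>w\<in>?CG. aG u w) = (if u \<in> ?CG then 2 else 0)" if u: "u \<in> V'" for u
    proof -
      have "(\<Sum>w\<in>?CG. aG u w) = real (card {w\<in>?CG. adjG u w})"
        unfolding aG_def by (rule sum_ind_card[OF fCG])
      also have "{w\<in>?CG. adjG u w} = (if u \<in> ?CG then {w. adjG u w} else {})"
        by (rule G.loop_closed[OF pa ea u])
      finally show ?thesis using degG[OF u] by simp
    qed
    have eigH: "(\<Sum>w\<in>?CH. aH u w) = (if u \<in> ?CH then 2 else 0)" if u: "u \<in> V'" for u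
    proof -
      have "(\<Sum>w\<in>?CH. aH u w) = real (card {w\<in>?CH. adjH u w})"
        unfolding aH_def by (rule sum_ind_card[OF fCH])
      also have "{w\<in>?CH. adjH u w} = (if u \<in> ?CH then {w. adjH u w} else {})"
        by (rule H.loop_closed[OF pb eb u])
      finally show ?thesis using degH[OF u] by simp
    qed
    have connH: "(v, c) \<in> {(x, y). x \<in> V' \<and> y \<in> V' \<and> 0 < aH x y}\<^sup>*" if "c \<in> ?CH" for c
    proof -
      have "(v, c) \<in> {(x, y). adjH x y}\<^sup>*" using H.loop_conn[OF pb that] .
      moreover have "{(x, y). adjH x y} \<subseteq> {(x, y). x \<in> V' \<and> y \<in> V' \<and> 0 < aH x y}"
        using HV' unfolding aH_def by auto
      ultimately show ?thesis using rtrancl_mono by blast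
    qed
    have connG: "(v, c) \<in> {(x, y). x \<in> V' \<and> y \<in> V' \<and> 0 < aG x y}\<^sup>*" if "c \<in> ?CG" for c
    proof -
      have "(v, c) \<in> {(x, y). adjG x y}\<^sup>*" using G.loop_conn[OF pa that] .
      moreover have "{(x, y). adjG x y} \<subseteq> {(x, y). x \<in> V' \<and> y \<in> V' \<and> 0 < aG x y}"
        using GV' unfolding aG_def by auto
      ultimately show ?thesis using rtrancl_mono by blast
    qed
    have le1: "card ?CH \<le> card ?CG"
    proof (rule e2[OF finV' orthM F5 _ _ sumH2 CG eigG _ _ _ CH connH])
      show "0 \<le> aH u w" for u w unfolding aH_def by simp
      show "aH u w = aH w u" for u w unfolding aH_def using Hsym by auto
      show "v \<in> ?CG" by simp
      show "M a v = (if a = v then s v else 0)" for a using Mv(1)[OF vN] .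
      show "s v * s v = 1" using ssq[OF vN] .
    qed
    have le2: "card ?CG \<le> card ?CH"
    proof (rule e2[OF finV' orth_tr[OF orthM] cj_inv[OF finV' orthM F5] _ _ sumG2 CH eigH _ _ _ CG connG])
      show "0 \<le> aG u w" for u w unfolding aG_def by simp
      show "aG u w = aG w u" for u w unfolding aG_def using Gsym by auto
      show "v \<in> ?CH" by simp
      show "tr M a v = (if a = v then s v else 0)" for a using Mv(2)[OF vN] .
      show "s v * s v = 1" using ssq[OF vN] .
    qed (assumption+)
    show ?thesis using le1 le2 G.loop_C_card[OF pa] H.loop_C_card[OF pb] by simp
  qed
  have cover: "\<exists>v a. G.port v a \<and> x \<in> G.sset v a" if x: "x \<in> X" for x
  proof -
    let ?G2 = "induced (nbhd_graph G X) X"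
    have fst2: "fst ?G2 = X" unfolding induced_def nbhd_graph_def by auto
    have snd2: "e \<in> snd ?G2 \<longleftrightarrow> e \<in> snd (nbhd_graph G X) \<and> e \<subseteq> X" for e unfolding induced_def by simp
    obtain C where C: "\<forall>c\<in>C. c \<noteq> {}" "\<Union>C = fst ?G2" "\<forall>c\<in>C. \<forall>d\<in>C. c \<noteq> d \<longrightarrow> c \<inter> d = {}"
      "\<forall>e\<in>snd ?G2. \<exists>c\<in>C. e \<subseteq> c" "\<forall>c\<in>C. is_path_graph (induced ?G2 c)"
      using assms(3) unfolding disjoint_union_of_def by (elim exE conjE) (rule that; assumption)
    obtain c where c: "c \<in> C" "x \<in> c" using C(2) x fst2 by blast
    have "is_path_graph (induced ?G2 c)" using C(5) c(1) by blast
    then obtain vs where vs: "vs \<noteq> []" "distinct vs" "set vs = fst (induced ?G2 c)"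
      "snd (induced ?G2 c) = {{vs ! i, vs ! Suc i} | i. Suc i < length vs}"
      unfolding is_path_graph_def by (elim exE conjE) (rule that; assumption)
    have setvs: "set vs = X \<inter> c" using vs(3) fst2 unfolding induced_def by simp
    have ind2: "e \<in> snd (induced ?G2 c) \<longleftrightarrow> e \<in> snd ?G2 \<and> e \<subseteq> c" for e unfolding induced_def by simp
    have edges: "\<exists>i. Suc i < length vs \<and> {y, z} = {vs ! i, vs ! Suc i}"
      if "y \<in> X" "z \<in> X" "adjG y z" "y \<in> set vs" for y z
    proof -
      have e2: "{y, z} \<in> snd ?G2" using that unfolding snd2 adjG_def by simp
      then obtain c' where c': "c' \<in> C" "{y, z} \<subseteq> c'" using C(4) by blast
      have "y \<in> c" using that(4) setvs by simp
      then have "c' = c" using C(3) c'(1) c(1) c'(2) by blast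
      then have "{y, z} \<in> snd (induced ?G2 c)" using e2 c'(2) unfolding ind2 by simp
      then show ?thesis unfolding vs(4) by blast
    qed
    have cons: "adjG (vs ! i) (vs ! Suc i)" if "Suc i < length vs" for i
    proof -
      have "{vs ! i, vs ! Suc i} \<in> snd (induced ?G2 c)" unfolding vs(4) using that by blast
      then show ?thesis unfolding ind2 snd2 adjG_def by simp
    qed
    have "x \<in> set vs" using setvs x c by simp
    then obtain i where i: "i < length vs" "x = vs ! i" by (metis in_set_conv_nth)
    have "set vs \<subseteq> X" using setvs by simp
    from G.path_cover[OF vs(2) vs(1) this edges cons i(1)] show ?thesis using i(2) by simp
  qed
  have tP: "pairL V' X Nn adjG adjH"
    by (rule pairL.intro[OF tG tH pairL_axioms.intro]) (use cnt loops in auto)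
  have t2: "tworeg2 V' X Nn adjG adjH"
    by (rule tworeg2.intro[OF tP tworeg2_axioms.intro]) (use cover in auto)
  obtain \<phi> where phi: "bij_betw \<phi> X X" and XX: "\<forall>x\<in>X. \<forall>y\<in>X. adjG x y \<longleftrightarrow> adjH (\<phi> x) (\<phi> y)"
    and NX: "\<forall>v\<in>Nn. \<forall>x\<in>X. adjG v x \<longleftrightarrow> adjH v (\<phi> x)"
    using tworeg2.iso[OF t2] by blast
  define f where "f z = (if z \<in> X then \<phi> z else z)" for z
  have NnH: "Nn \<subseteq> nbhd H X"
  proof
    fix y assume y: "y \<in> Nn"
    then have yV: "y \<in> V'" "y \<notin> X" using dsj unfolding V'_def by auto
    have "card {w. adjH y w} = 2" using degH[OF yV(1)] .
    then obtain z where z: "adjH y z" by (metis card.empty empty_Collect_eq zero_neq_numeral)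
    have "z \<in> X" "{z, y} \<in> snd H" using z yV unfolding adjH_iff by (auto simp: insert_commute)
    moreover have "y \<in> fst H" using yV V'V VH unfolding V_def by auto
    ultimately show "y \<in> nbhd H X" unfolding nbhd_def by blast
  qed
  have fstG: "fst (induced (nbhd_graph G X) (X \<union> Y)) = X \<union> Y"
    using Y unfolding induced_def nbhd_graph_def by auto
  have fstH: "fst (induced (nbhd_graph H X) (X \<union> Y)) = X \<union> Y"
    using YN NnH unfolding induced_def nbhd_graph_def by auto
  have sndG: "{u, w} \<in> snd (induced (nbhd_graph G X) (X \<union> Y)) \<longleftrightarrow> adjG u w" if "u \<in> X \<union> Y" "w \<in> X \<union> Y" for u w
    using that unfolding induced_def adjG_def by simp
  have sndH: "{u, w} \<in> snd (induced (nbhd_graph H X) (X \<union> Y)) \<longleftrightarrow> adjH u w" if "u \<in> X \<union> Y" "w \<in> X \<union> Y" for u w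
    using that unfolding induced_def adjH_def by simp
  have fXY: "f u \<in> X \<union> Y" if "u \<in> X \<union> Y" for u
    using that phi unfolding f_def bij_betw_def by auto
  have bijf: "bij_betw f (X \<union> Y) (X \<union> Y)"
  proof -
    have b1: "bij_betw f X X" using phi unfolding f_def by (rule bij_betw_cong[THEN iffD1, rotated]) auto
    have b2: "bij_betw f (Y - X) (Y - X)" unfolding f_def by (rule bij_betw_cong[THEN iffD1, rotated, OF bij_betw_id]) auto
    have "bij_betw f (X \<union> (Y - X)) (X \<union> (Y - X))" using bij_betw_combine[OF b1 b2] by auto
    moreover have "X \<union> (Y - X) = X \<union> Y" by auto
    ultimately show ?thesis by simp
  qed
  have edge: "adjG u w \<longleftrightarrow> adjH (f u) (f w)" if u: "u \<in> X \<union> Y" and w: "w \<in> X \<union> Y" for u w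
  proof (cases "u \<in> X")
    case uX: True
    show ?thesis
    proof (cases "w \<in> X")
      case True then show ?thesis using XX uX unfolding f_def by simp
    next
      case False
      then have wN: "w \<in> Nn" using w YN by auto
      have "adjG u w \<longleftrightarrow> adjG w u" using Gsym by blast
      also have "\<dots> \<longleftrightarrow> adjH w (\<phi> u)" using NX wN uX by simp
      also have "\<dots> \<longleftrightarrow> adjH (\<phi> u) w" using Hsym by blast
      finally show ?thesis unfolding f_def using uX False by simp
    qed
  next
    case uX: False
    then have uN: "u \<in> Nn" using u YN by auto
    show ?thesis
    proof (cases "w \<in> X")
      case True then show ?thesis using NX uN uX unfolding f_def by simp
    next
      case False
      then have wN: "w \<in> Nn" using w YN by auto
      then show ?thesis using Gind[OF uN wN] Hind[OF uN wN] uX False unfolding f_def by simp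
    qed
  qed
  show "isomorphic (induced (nbhd_graph G X) (X \<union> Y)) (induced (nbhd_graph H X) (X \<union> Y))"
    unfolding isomorphic_def fstG fstH
  proof (intro exI[of _ f] conjI bijf ballI)
    fix u w assume u: "u \<in> X \<union> Y" and w: "w \<in> X \<union> Y"
    show "{u, w} \<in> snd (induced (nbhd_graph G X) (X \<union> Y)) \<longleftrightarrow> {f u, f w} \<in> snd (induced (nbhd_graph H X) (X \<union> Y))"
      using sndG[OF u w] sndH[OF fXY[OF u] fXY[OF w]] edge[OF u w] by simp
  qed
qed

end
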